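(* Let $s\in\mathbb{N}$, $p,q\in[1,\infty]$, and $\alpha>0$. Then there exists a constant $c>0$, depending only on $\alpha,s,b$ and $q$, such that every cubature rule $Q(f)=\sum_{i=1}^N w_i f(\mathbf{x}_i)$ (with arbitrary points $\mathbf{x}_i\in[0,1)^s$ and arbitrary real weights $w_i$) that uses $N\ge3$ sample points satisfies $$e^{\mathrm{wor}}(Q,\widetilde{\mathcal{H}}_{\mathrm{wav},\alpha,s,p,q})\ge c\,N^{-\alpha}\ln(N)^{\frac{s-1}{q'}},$$ where $1/q+1/q'=1$ and $\widetilde{\mathcal{H}}_{\mathrm{wav},\alpha,s,p,q}$ denotes the subspace $\bigcup_{L\in\mathbb{N}_0}V^{s,L}$ of $\mathcal{H}_{\mathrm{wav},\alpha,s,p,q}$ endowed with the norm $\|\cdot\|_{\mathrm{wav},\alpha,s,p,q}$.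
   Context: Conventions: $1/\infty=0$, $r^{1/\infty}=1$. Fix an integer base $b\ge2$. Put $\Delta_{-1}=\{0\}$, $\Delta_j=\{0,\dots,b^j-1\}$ ($j\in\mathbb{N}_0$), $\nabla_0=\{0\}$, $\nabla_j=\{0,\dots,b-1\}$ ($j\ge1$). Univariate Haar functions: $\psi^0_{0,0}=1_{[0,1)}$ and for $j\ge1$, $i\in\nabla_j$, $k\in\Delta_{j-1}$: $\psi^j_{i,k}(x)=b^{j/2-1}\big(b\,1_{[b^{-j}(bk+i),b^{-j}(bk+i+1))}(x)-1_{[b^{1-j}k,b^{1-j}(k+1))}(x)\big)$. For $\mathbf{j}\in\mathbb{N}_0^s$: $|\mathbf{j}|=\sum_\ell j_\ell$, $\nabla_{\mathbf{j}}=\prod_\ell\nabla_{j_\ell}$, $\Delta_{\mathbf{j}-\mathbf{1}}=\prod_\ell\Delta_{j_\ell-1}$, $\Psi^{\mathbf{j}}_{\mathbf{i},\mathbf{k}}(\mathbf{x})=\prod_{\ell=1}^s\psi^{j_\ell}_{i_\ell,k_\ell}(x_\ell)$, $\langle f,g\rangle=\int_{[0,1]^s}fg$. For $q<\infty$: $\|f\|^q_{\mathrm{wav},\alpha,s,p,q}=\sum_{L=0}^\infty b^{q(\alpha-1/p+1/2)L}\sum_{|\mathbf{j}|=L}\big(\sum_{\mathbf{k}\in\Delta_{\mathbf{j}-\mathbf{1}}}\sum_{\mathbf{i}\in\nabla_{\mathbf{j}}}|\langle f,\Psi^{\mathbf{j}}_{\mathbf{i},\mathbf{k}}\rangle|^p\big)^{q/p}$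 (maximum instead of $\ell_p$-sum if $p=\infty$); for $q=\infty$: $\|f\|_{\mathrm{wav},\alpha,s,p,\infty}=\sup_{\mathbf{j}}b^{(\alpha-1/p+1/2)|\mathbf{j}|}(\sum_{\mathbf{k}}\sum_{\mathbf{i}}|\langle f,\Psi^{\mathbf{j}}_{\mathbf{i},\mathbf{k}}\rangle|^p)^{1/p}$. $\mathcal{H}_{\mathrm{wav},\alpha,s,p,q}$ is the space of $f\in L_1([0,1]^s)$ with finite norm (for $q=\infty$ additionally requiring that the wavelet series of $f$ converges pointwise to a function equal to $f$ a.e.). Approximation spaces: for $j\in\mathbb{N}_0$ let $V^j$ be the space of functions on $[0,1)$ constant on each interval $[kb^{-j},(k+1)b^{-j})$, $k\in\Delta_j$; for $L\in\mathbb{N}_0$, $V^{s,L}$ is the linear span of all functions $\mathbf{x}\mapsto\prod_{\ell=1}^s g_\ell(x_\ell)$ with $g_\ell\in V^{j_\ell}$ and $|\mathbf{j}|=L$. Elements of $V^{s,L}$ are finite linear combinations of indicator functions of half-open boxes, so point evaluation is well defined on them. For a normed function space $X$ and a cubature rule $Q$, $e^{\mathrm{wor}}(Q,X)=\sup\{|\int_{[0,1]^s}f-Q(f)|: f\in X,\|f\|_X\le1\}$. *)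

theory Defs
  imports "HOL-Analysis.Analysis"
begin

(* Exponents p, q in [1,\<infinity>] are extended reals. Convention 1/\<infinity> = 0. *)
definition einv :: "ereal \<Rightarrow> real" where
  "einv p = (if p = \<infinity> then 0 else 1 / real_of_ereal p)"

definition nabla :: "nat \<Rightarrow> nat \<Rightarrow> nat set" where
  "nabla b j = (if j = 0 then {0} else {0..<b})"

definition delta_m1 :: "nat \<Rightarrow> nat \<Rightarrow> nat set" where
  "delta_m1 b j = (if j = 0 then {0} else {0..<b ^ (j - 1)})"

definition haar :: "nat \<Rightarrow> nat \<Rightarrow> nat \<Rightarrow> nat \<Rightarrow> real \<Rightarrow> real" where
  "haar b j i k x =
    (if j = 0 then indicator {0..<1} x
     else real b powr (real j / 2 - 1) *
       (real b * indicator {real b powr (- real j) * (real b * real k + real i) ..<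
                            real b powr (- real j) * (real b * real k + real i + 1)} x
        - indicator {real b powr (1 - real j) * real k ..< real b powr (1 - real j) * (real k + 1)} x))"

(* Multivariate Haar functions; points of [0,1]^s are functions nat \<Rightarrow> real
  of which only the coordinates 0..<s matter. *)
definition Haar :: "nat \<Rightarrow> nat \<Rightarrow> (nat \<Rightarrow> nat) \<Rightarrow> (nat \<Rightarrow> nat) \<Rightarrow> (nat \<Rightarrow> nat)
                      \<Rightarrow> (nat \<Rightarrow> real) \<Rightarrow> real" where
  "Haar b s jv iv kv x = (\<Prod>l<s. haar b (jv l) (iv l) (kv l) (x l))"

definition cube :: "nat \<Rightarrow> (nat \<Rightarrow> real) measure" where
  "cube s = PiM {..<s} (\<lambda>_. restrict_space lborel {0..1})"

definition wcoef :: "nat \<Rightarrow> nat \<Rightarrow> ((nat \<Rightarrow> real) \<Rightarrow> real) \<Rightarrow> (nat \<Rightarrow> nat) \<Rightarrow> (nat \<Rightarrow> nat)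
                      \<Rightarrow> (nat \<Rightarrow> nat) \<Rightarrow> real" where
  "wcoef b s f jv iv kv = integral\<^sup>L (cube s) (\<lambda>x. f x * Haar b s jv iv kv x)"

definition levels :: "nat \<Rightarrow> nat \<Rightarrow> (nat \<Rightarrow> nat) set" where
  "levels s L = {jv \<in> PiE {..<s} (\<lambda>_. {..L}). (\<Sum>l<s. jv l) = L}"

definition all_levels :: "nat \<Rightarrow> (nat \<Rightarrow> nat) set" where
  "all_levels s = (\<Union>L. levels s L)"

definition kiset :: "nat \<Rightarrow> nat \<Rightarrow> (nat \<Rightarrow> nat) \<Rightarrow> ((nat \<Rightarrow> nat) \<times> (nat \<Rightarrow> nat)) set" where
  "kiset b s jv = PiE {..<s} (\<lambda>l. delta_m1 b (jv l)) \<times> PiE {..<s} (\<lambda>l. nabla b (jv l))"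

definition inner_p :: "nat \<Rightarrow> nat \<Rightarrow> ereal \<Rightarrow> ((nat \<Rightarrow> real) \<Rightarrow> real) \<Rightarrow> (nat \<Rightarrow> nat) \<Rightarrow> real" where
  "inner_p b s p f jv =
    (if p = \<infinity> then Max ((\<lambda>(kv, iv). \<bar>wcoef b s f jv iv kv\<bar>) ` kiset b s jv)
     else (\<Sum>(kv, iv)\<in>kiset b s jv. \<bar>wcoef b s f jv iv kv\<bar> powr real_of_ereal p)
            powr (1 / real_of_ereal p))"

definition wterm :: "nat \<Rightarrow> real \<Rightarrow> nat \<Rightarrow> ereal \<Rightarrow> ((nat \<Rightarrow> real) \<Rightarrow> real) \<Rightarrow> (nat \<Rightarrow> nat) \<Rightarrow> real" where
  "wterm b \<alpha> s p f jv =
     real b powr ((\<alpha> - einv p + 1/2) * real (\<Sum>l<s. jv l)) * inner_p b s p f jv"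

definition wav_norm :: "nat \<Rightarrow> real \<Rightarrow> nat \<Rightarrow> ereal \<Rightarrow> ereal \<Rightarrow> ((nat \<Rightarrow> real) \<Rightarrow> real) \<Rightarrow> ereal" where
  "wav_norm b \<alpha> s p q f =
    (if q = \<infinity> then (SUP jv\<in>all_levels s. ereal (wterm b \<alpha> s p f jv))
     else (let S = (\<Sum>L. ennreal (\<Sum>jv\<in>levels s L. wterm b \<alpha> s p f jv powr real_of_ereal q))
           in if S = top then \<infinity> else ereal (enn2real S powr (1 / real_of_ereal q))))"

(* V^j: functions on [0,1) constant on the b-adic intervals of length b^{-j}
  (extended by 0 outside [0,1)). *)
definition Vj :: "nat \<Rightarrow> nat \<Rightarrow> (real \<Rightarrow> real) set" where
  "Vj b j = {g. \<exists>c :: nat \<Rightarrow> real. \<forall>x. g x =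
     (if 0 \<le> x \<and> x < 1 then c (nat \<lfloor>real b ^ j * x\<rfloor>) else 0)}"

definition VsL :: "nat \<Rightarrow> nat \<Rightarrow> nat \<Rightarrow> ((nat \<Rightarrow> real) \<Rightarrow> real) set" where
  "VsL b s L = {f. \<exists>(n::nat) (a :: nat \<Rightarrow> real) (jv :: nat \<Rightarrow> nat \<Rightarrow> nat)
                      (g :: nat \<Rightarrow> nat \<Rightarrow> real \<Rightarrow> real).
      (\<forall>t<n. (\<Sum>l<s. jv t l) = L \<and> (\<forall>l<s. g t l \<in> Vj b (jv t l))) \<and>
      f = (\<lambda>x. \<Sum>t<n. a t * (\<Prod>l<s. g t l (x l)))}"

definition Htilde :: "nat \<Rightarrow> nat \<Rightarrow> ((nat \<Rightarrow> real) \<Rightarrow> real) set" where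
  "Htilde b s = (\<Union>L. VsL b s L)"

definition e_wor :: "nat \<Rightarrow> real \<Rightarrow> nat \<Rightarrow> ereal \<Rightarrow> ereal \<Rightarrow> nat \<Rightarrow> (nat \<Rightarrow> real)
                      \<Rightarrow> (nat \<Rightarrow> nat \<Rightarrow> real) \<Rightarrow> ereal" where
  "e_wor b \<alpha> s p q N w x =
     (SUP f\<in>{f \<in> Htilde b s. wav_norm b \<alpha> s p q f \<le> 1}.
        ereal \<bar>integral\<^sup>L (cube s) f - (\<Sum>i<N. w i * f (x i))\<bar>)"

end

theory Submission
  imports Defs
begin


definition ind :: "nat \<Rightarrow> nat \<Rightarrow> nat \<Rightarrow> real \<Rightarrow> real" where
  "ind b j k x = (if \<lfloor>real b ^ j * x\<rfloor> = int k then 1 else 0)"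

definition M1 :: "real measure" where "M1 = restrict_space lborel {0..1}"

lemma ind_indicator:
  assumes "b \<ge> 1"
  shows "ind b j k x = indicator {real k / real b ^ j ..< (real k + 1) / real b ^ j} x"
proof -
  have bp: "real b ^ j > 0" using assms by simp
  have "(\<lfloor>real b ^ j * x\<rfloor> = int k) \<longleftrightarrow> (real k \<le> real b ^ j * x \<and> real b ^ j * x < real k + 1)"
    by (simp add: floor_eq_iff)
  also have "\<dots> \<longleftrightarrow> x \<in> {real k / real b ^ j ..< (real k + 1) / real b ^ j}"
    using bp by (auto simp: field_simps)
  finally show ?thesis by (simp add: ind_def indicator_def)
qed

lemma ind_nonneg: "0 \<le> ind b j k x" and ind_le1: "ind b j k x \<le> 1"
  by (auto simp: ind_def)

lemma ind_mult:
  assumes "b \<ge> 1" "j \<le> m"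
  shows "ind b j k x * ind b m n x = (if n div b ^ (m - j) = k then ind b m n x else 0)"
proof -
  have "\<lfloor>real b ^ j * x\<rfloor> = \<lfloor>real b ^ m * x\<rfloor> div int (b ^ (m - j))"
  proof -
    have "real b ^ m = real b ^ j * real b ^ (m - j)" using assms by (simp add: power_add[symmetric])
    hence "\<lfloor>real b ^ j * x\<rfloor> = \<lfloor>(real b ^ m * x) / real_of_int (int (b ^ (m - j)))\<rfloor>" using assms by simp
    also have "\<lfloor>(real b ^ m * x) / real_of_int (int (b ^ (m - j)))\<rfloor> = \<lfloor>real b ^ m * x\<rfloor> div int (b ^ (m - j))"
      by (rule floor_divide_real_eq_div) simp
    finally show ?thesis by simp
  qed
  note fl = this
  show ?thesis
  proof (cases "\<lfloor>real b ^ m * x\<rfloor> = int n")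
    case True
    with fl have "\<lfloor>real b ^ j * x\<rfloor> = int (n div b ^ (m - j))" by (simp only: zdiv_int[symmetric])
    with True show ?thesis unfolding ind_def by auto
  next
    case False
    then show ?thesis unfolding ind_def by auto
  qed
qed

lemma haar0: "b \<ge> 1 \<Longrightarrow> haar b 0 i k x = ind b 0 0 x"
  by (simp add: haar_def ind_indicator)

lemma haar_ind:
  assumes "b \<ge> 2" "m \<ge> 1"
  shows "haar b m i k x = real b powr (real m / 2 - 1) *
           (real b * ind b m (b * k + i) x - ind b (m - 1) k x)"
proof -
  have bpos: "real b > 0" using assms by simp
  have e1: "real b powr (- real m) = 1 / real b ^ m"
    using bpos by (simp add: powr_minus powr_realpow divide_simps)
  have e2: "real b powr (1 - real m) = 1 / real b ^ (m - 1)"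
  proof -
    have "1 - real m = - real (m - 1)" using assms by simp
    hence "real b powr (1 - real m) = real b powr (- real (m - 1))" by (simp only:)
    also have "\<dots> = 1 / real b ^ (m - 1)" using bpos by (simp only: powr_minus powr_realpow) (simp add: divide_simps)
    finally show ?thesis .
  qed
  have i1: "ind b m (b * k + i) x = indicator {real b powr (- real m) * (real b * real k + real i) ..<
                            real b powr (- real m) * (real b * real k + real i + 1)} x"
    using assms unfolding ind_indicator[OF order_trans[OF one_le_numeral assms(1)]] e1 by (simp add: field_simps)
  have i2: "ind b (m - 1) k x = indicator {real b powr (1 - real m) * real k ..< real b powr (1 - real m) * (real k + 1)} x"
    using assms unfolding ind_indicator[OF order_trans[OF one_le_numeral assms(1)]] e2 by (simp add: field_simps)
  have "m \<noteq> 0" using assms by simp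
  show ?thesis unfolding haar_def i1 i2 by (simp only: if_not_P[OF \<open>m \<noteq> 0\<close>])
qed

lemma space_M1[simp]: "space M1 = {0..1}"
  by (simp add: M1_def space_restrict_space)

lemma sets_M1: "sets M1 = sets (restrict_space lborel {0..1::real})"
  by (simp add: M1_def)

lemma finite_measure_M1: "finite_measure M1"
  unfolding M1_def
  by (rule finite_measureI) (simp add: emeasure_restrict_space space_restrict_space)

lemma measurable_M1: "f \<in> borel_measurable borel \<Longrightarrow> f \<in> borel_measurable M1"
  unfolding M1_def by (rule measurable_restrict_space1) simp

lemma integrable_M1:
  fixes f :: "real \<Rightarrow> real"
  assumes "f \<in> borel_measurable borel" "\<And>x. \<bar>f x\<bar> \<le> B"
  shows "integrable M1 f"
proof -
  interpret finite_measure M1 by (rule finite_measure_M1)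
  show ?thesis using assms by (intro integrable_const_bound[where B=B] measurable_M1) auto
qed

lemma ind_measurable[measurable]: assumes "b \<ge> 1" shows "ind b j k \<in> borel_measurable borel"
proof -
  have "ind b j k = indicator {real k / real b ^ j ..< (real k + 1) / real b ^ j}"
    by (rule ext) (rule ind_indicator[OF assms])
  thus ?thesis by simp
qed

lemma haar_measurable[measurable]: "haar b m i k \<in> borel_measurable borel"
  unfolding haar_def[abs_def] by measurable

lemma integral_ind_M1:
  assumes "b \<ge> 1" "k < b ^ j"
  shows "integral\<^sup>L M1 (ind b j k) = 1 / real b ^ j"
proof -
  have bp: "real b ^ j > 0" using assms by simp
  have kk: "real k + 1 \<le> real b ^ j" using assms
    by (metis Suc_leI of_nat_Suc of_nat_le_iff of_nat_power add.commute)
  have sub: "{real k / real b ^ j ..< (real k + 1) / real b ^ j} \<subseteq> {0..1}"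
  proof
    fix x assume x: "x \<in> {real k / real b ^ j ..< (real k + 1) / real b ^ j}"
    have h0: "0 \<le> real k / real b ^ j" using bp by simp
    have h1: "(real k + 1) / real b ^ j \<le> 1" using bp kk by simp
    from x have "real k / real b ^ j \<le> x" "x < (real k + 1) / real b ^ j" by auto
    with h0 h1 have "0 \<le> x" "x \<le> 1" by linarith+
    then show "x \<in> {0..1}" by auto
  qed
  have "integral\<^sup>L M1 (ind b j k) = integral\<^sup>L lborel (\<lambda>x. indicator {0..1} x *\<^sub>R ind b j k x)"
    unfolding M1_def by (rule integral_restrict_space) simp
  also have "(\<lambda>x. indicator {0..1} x *\<^sub>R ind b j k x) = indicator {real k / real b ^ j ..< (real k + 1) / real b ^ j}"
    using sub assms(1) by (auto simp: ind_indicator indicator_def fun_eq_iff)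
  also have "integral\<^sup>L lborel \<dots> = (real k + 1) / real b ^ j - real k / real b ^ j"
  proof -
    have le: "real k / real b ^ j \<le> (real k + 1) / real b ^ j" using bp by (simp add: divide_right_mono)
    have "integral\<^sup>L lborel (indicator {real k / real b ^ j ..< (real k + 1) / real b ^ j})
       = measure lborel ({real k / real b ^ j ..< (real k + 1) / real b ^ j} \<inter> space lborel)"
      by (rule Bochner_Integration.integral_indicator)
    also have "{real k / real b ^ j ..< (real k + 1) / real b ^ j} \<inter> space lborel = {real k / real b ^ j ..< (real k + 1) / real b ^ j}"
      by simp
    also have "measure lborel {real k / real b ^ j ..< (real k + 1) / real b ^ j} = (real k + 1) / real b ^ j - real k / real b ^ j"
      by (rule measure_lborel_Ico[OF le])
    finally show ?thesis .
  qed
  also have "\<dots> = 1 / real b ^ j" by (simp add: diff_divide_distrib[symmetric])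
  finally show ?thesis .
qed

lemma integrable_ind: "b \<ge> 1 \<Longrightarrow> integrable M1 (ind b j k)"
  by (rule integrable_M1[where B=1]) (auto simp: ind_def)

lemma haar_bound: "\<bar>haar b m i k x\<bar> \<le> (if m = 0 then 1 else real b powr (real m / 2 - 1) * (real b + 1))"
proof -
  have "\<bar>real b * indicator A x - indicator B x\<bar> \<le> real b + 1" for A B :: "real set"
    by (auto simp: indicator_def)
  moreover have "0 \<le> real b powr (real m / 2 - 1)" by simp
  ultimately have "\<bar>real b powr (real m / 2 - 1) * (real b * indicator A x - indicator B x)\<bar> \<le> real b powr (real m / 2 - 1) * (real b + 1)" for A B :: "real set"
    by (simp add: abs_mult mult_left_mono)
  note * = this
  show ?thesis
  proof (cases "m = 0")
    case True
    thus ?thesis by (simp add: haar_def indicator_def)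
  next
    case False
    show ?thesis unfolding haar_def if_not_P[OF False] by (rule *)
  qed
qed

lemma integrable_ind_haar:
  assumes "b \<ge> 2"
  shows "integrable M1 (\<lambda>x. ind b j k x * haar b m i k' x)"
proof (rule integrable_M1[where B="(if m = 0 then 1 else real b powr (real m / 2 - 1) * (real b + 1))"])
  show "(\<lambda>x. ind b j k x * haar b m i k' x) \<in> borel_measurable borel"
    using assms by (intro borel_measurable_times ind_measurable haar_measurable) simp_all
  fix x
  have "\<bar>ind b j k x * haar b m i k' x\<bar> \<le> \<bar>haar b m i k' x\<bar>"
    by (auto simp: ind_def abs_mult)
  also note haar_bound
  finally show "\<bar>ind b j k x * haar b m i k' x\<bar> \<le> (if m = 0 then 1 else real b powr (real m / 2 - 1) * (real b + 1))" .
qed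

lemma integrable_haar: "integrable M1 (haar b m i k')"
  by (rule integrable_M1[OF haar_measurable haar_bound])

lemma coef_vanish:
  assumes b: "b \<ge> 2" and jm: "j < m" and k': "k' < b ^ (m - 1)" and i: "i < b"
  shows "integral\<^sup>L M1 (\<lambda>x. ind b j k x * haar b m i k' x) = 0"
proof -
  have b1: "b \<ge> 1" using b by simp
  have m1: "m \<ge> 1" using jm by simp
  define c where "c = real b powr (real m / 2 - 1)"
  define n where "n = b * k' + i"
  have dv: "n div b ^ (m - j) = k' div b ^ (m - 1 - j)"
  proof -
    have "b ^ (m - j) = b * b ^ (m - 1 - j)" using jm by (simp add: power_Suc[symmetric] Suc_diff_Suc)
    hence "n div b ^ (m - j) = n div b div b ^ (m - 1 - j)" by (simp add: div_mult2_eq)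
    also have "n div b = k'" unfolding n_def using i by simp
    finally show ?thesis .
  qed
  have nlt: "n < b ^ m"
  proof -
    have "n < b * (k' + 1)" unfolding n_def using i by simp
    also have "\<dots> \<le> b * b ^ (m - 1)" using k' by (intro mult_left_mono) auto
    also have "\<dots> = b ^ m" using m1 by (simp add: power_Suc[symmetric])
    finally show ?thesis .
  qed
  have eq: "(\<lambda>x. ind b j k x * haar b m i k' x) =
     (\<lambda>x. c * (real b * (if k' div b ^ (m - 1 - j) = k then ind b m n x else 0)
        - (if k' div b ^ (m - 1 - j) = k then ind b (m - 1) k' x else 0)))"
  proof
    fix x
    have "ind b j k x * haar b m i k' x = c * (real b * (ind b j k x * ind b m n x) - ind b j k x * ind b (m - 1) k' x)"
      using b m1 by (simp add: haar_ind c_def n_def algebra_simps)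
    also have "ind b j k x * ind b m n x = (if n div b ^ (m - j) = k then ind b m n x else 0)"
      using jm b1 by (intro ind_mult) auto
    also have "ind b j k x * ind b (m - 1) k' x = (if k' div b ^ (m - 1 - j) = k then ind b (m - 1) k' x else 0)"
      using jm b1 by (intro ind_mult) auto
    finally show "ind b j k x * haar b m i k' x = c * (real b * (if k' div b ^ (m - 1 - j) = k then ind b m n x else 0)
        - (if k' div b ^ (m - 1 - j) = k then ind b (m - 1) k' x else 0))" by (simp add: dv)
  qed
  show ?thesis
  proof (cases "k' div b ^ (m - 1 - j) = k")
    case False
    thus ?thesis unfolding eq by simp
  next
    case True
    have "integral\<^sup>L M1 (\<lambda>x. ind b j k x * haar b m i k' x) = c * (real b * integral\<^sup>L M1 (ind b m n) - integral\<^sup>L M1 (ind b (m - 1) k'))"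
      unfolding eq using True b1 by (simp add: integrable_ind)
    also have "\<dots> = c * (real b / real b ^ m - 1 / real b ^ (m - 1))"
      using b1 nlt k' by (simp add: integral_ind_M1)
    also have "real b / real b ^ m = 1 / real b ^ (m - 1)"
    proof -
      have "real b ^ m = real b * real b ^ (m - 1)" using m1 by (simp add: power_Suc[symmetric])
      thus ?thesis using b by simp
    qed
    finally show ?thesis by simp
  qed
qed

lemma haar_L1:
  assumes b: "b \<ge> 2" and k': "k' < b ^ (m - 1)" and i: "i < b"
  shows "integral\<^sup>L M1 (\<lambda>x. \<bar>haar b m i k' x\<bar>) \<le> 2 * real b powr (- real m / 2)"
proof (cases "m = 0")
  case True
  have "integral\<^sup>L M1 (\<lambda>x. \<bar>haar b m i k' x\<bar>) = integral\<^sup>L M1 (ind b 0 0)"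
  proof -
    have "\<And>x. \<bar>haar b m i k' x\<bar> = ind b 0 0 x" using True b by (simp add: haar0 ind_nonneg)
    thus ?thesis by simp
  qed
  also have "\<dots> = 1" using b by (subst integral_ind_M1) auto
  finally show ?thesis using True b by simp
next
  case False
  hence m1: "m \<ge> 1" by simp
  have b1: "b \<ge> 1" using b by simp
  define c where "c = real b powr (real m / 2 - 1)"
  define n where "n = b * k' + i"
  have nlt: "n < b ^ m"
  proof -
    have "n < b * (k' + 1)" unfolding n_def using i by simp
    also have "\<dots> \<le> b * b ^ (m - 1)" using k' by (intro mult_left_mono) auto
    also have "\<dots> = b ^ m" using m1 by (simp add: power_Suc[symmetric])
    finally show ?thesis .
  qed
  have c0: "c \<ge> 0" by (simp add: c_def)
  have "integral\<^sup>L M1 (\<lambda>x. \<bar>haar b m i k' x\<bar>) \<le> integral\<^sup>L M1 (\<lambda>x. c * (real b * ind b m n x + ind b (m - 1) k' x))"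
  proof (rule integral_mono)
    show "integrable M1 (\<lambda>x. \<bar>haar b m i k' x\<bar>)"
      by (intro integrable_abs integrable_haar)
    show "integrable M1 (\<lambda>x. c * (real b * ind b m n x + ind b (m - 1) k' x))"
      using b1 by (simp add: integrable_ind)
    fix x
    have "\<bar>haar b m i k' x\<bar> = c * \<bar>real b * ind b m n x - ind b (m - 1) k' x\<bar>"
      using b m1 c0 by (simp add: haar_ind c_def n_def abs_mult)
    also have "\<dots> \<le> c * (real b * ind b m n x + ind b (m - 1) k' x)"
      using c0 by (intro mult_left_mono) (auto simp: ind_def)
    finally show "\<bar>haar b m i k' x\<bar> \<le> c * (real b * ind b m n x + ind b (m - 1) k' x)" .
  qed
  also have "\<dots> = c * (real b * (1 / real b ^ m) + 1 / real b ^ (m - 1))"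
    using b1 nlt k' by (simp add: integrable_ind integral_ind_M1)
  also have "real b * (1 / real b ^ m) = 1 / real b ^ (m - 1)"
  proof -
    have "real b ^ m = real b * real b ^ (m - 1)" using m1 by (simp add: power_Suc[symmetric])
    thus ?thesis using b by simp
  qed
  also have "c * (1 / real b ^ (m - 1) + 1 / real b ^ (m - 1)) = 2 * real b powr (- real m / 2)"
  proof -
    have "real b ^ (m - 1) = real b powr (real m - 1)"
      using b m1 by (simp add: powr_realpow[symmetric] of_nat_diff)
    hence "c * (1 / real b ^ (m - 1) + 1 / real b ^ (m - 1)) = 2 * (real b powr (real m / 2 - 1) / real b powr (real m - 1))"
      by (simp add: c_def)
    also have "real b powr (real m / 2 - 1) / real b powr (real m - 1) = real b powr (- real m / 2)"
      by (simp add: powr_diff[symmetric])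
    finally show ?thesis .
  qed
  finally show ?thesis .
qed

lemma sum_ind_le1: "(\<Sum>k<n. ind b j k x) \<le> 1"
proof -
  define F where "F = \<lfloor>real b ^ j * x\<rfloor>"
  have "(\<Sum>k<n. ind b j k x) = real (card ({..<n} \<inter> {k. F = int k}))"
    by (simp add: sum.If_cases ind_def F_def)
  also have "card ({..<n} \<inter> {k. F = int k}) \<le> card {nat F}"
    by (rule card_mono) auto
  finally show ?thesis by simp
qed

lemma sum_coef_le:
  fixes h :: "real \<Rightarrow> real"
  assumes b: "b \<ge> 1" and hm: "h \<in> borel_measurable borel" and hb: "\<And>x. \<bar>h x\<bar> \<le> B"
  shows "(\<Sum>k<n. \<bar>integral\<^sup>L M1 (\<lambda>x. ind b j k x * h x)\<bar>) \<le> integral\<^sup>L M1 (\<lambda>x. \<bar>h x\<bar>)"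
proof -
  have bnd: "\<bar>ind b j k x * h x\<bar> \<le> B" for k x
  proof -
    have "\<bar>ind b j k x * h x\<bar> \<le> \<bar>h x\<bar>" by (auto simp: ind_def abs_mult)
    also note hb
    finally show ?thesis .
  qed
  have i1: "integrable M1 (\<lambda>x. ind b j k x * h x)" for k
    using b hm bnd by (intro integrable_M1[where B=B]) auto
  have i2: "integrable M1 (\<lambda>x. ind b j k x * \<bar>h x\<bar>)" for k
    using b hm bnd by (intro integrable_M1[where B=B]) (auto simp: abs_mult)
  have "(\<Sum>k<n. \<bar>integral\<^sup>L M1 (\<lambda>x. ind b j k x * h x)\<bar>) \<le> (\<Sum>k<n. integral\<^sup>L M1 (\<lambda>x. ind b j k x * \<bar>h x\<bar>))"
  proof (rule sum_mono)
    fix k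
    show "\<bar>integral\<^sup>L M1 (\<lambda>x. ind b j k x * h x)\<bar> \<le> integral\<^sup>L M1 (\<lambda>x. ind b j k x * \<bar>h x\<bar>)"
      using i1 i2 by (rule integral_abs_bound_integral) (auto simp: ind_def abs_mult)
  qed
  also have "\<dots> = integral\<^sup>L M1 (\<lambda>x. \<Sum>k<n. ind b j k x * \<bar>h x\<bar>)"
    by (subst Bochner_Integration.integral_sum) (use i2 in auto)
  also have "\<dots> \<le> integral\<^sup>L M1 (\<lambda>x. \<bar>h x\<bar>)"
  proof (rule integral_mono)
    show "integrable M1 (\<lambda>x. \<Sum>k<n. ind b j k x * \<bar>h x\<bar>)" using i2 by auto
    show "integrable M1 (\<lambda>x. \<bar>h x\<bar>)" using hm hb by (intro integrable_M1[where B=B]) auto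
    fix x
    have "(\<Sum>k<n. ind b j k x * \<bar>h x\<bar>) = (\<Sum>k<n. ind b j k x) * \<bar>h x\<bar>" by (simp add: sum_distrib_right)
    also have "\<dots> \<le> 1 * \<bar>h x\<bar>" by (intro mult_right_mono sum_ind_le1) auto
    finally show "(\<Sum>k<n. ind b j k x * \<bar>h x\<bar>) \<le> \<bar>h x\<bar>" by simp
  qed
  finally show ?thesis .
qed



lemma geo_bound:
  fixes r \<beta> \<gamma> :: real
  assumes r: "r \<ge> 0" and \<beta>: "\<beta> > 1" and \<gamma>: "\<gamma> > 0"
  shows "\<exists>K>0. \<forall>L. (\<Sum>d\<le>L. (real d + 1) powr r * \<beta> powr (- \<gamma> * real d)) \<le> K"
proof -
  define t where "t = \<beta> powr (\<gamma> / (2 * (r + 1)))"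
  have t1: "t > 1" unfolding t_def using \<beta> \<gamma> r by (intro gr_one_powr) auto
  define A where "A = t / (t - 1)"
  have A0: "A > 0" using t1 by (simp add: A_def)
  define \<sigma> where "\<sigma> = \<beta> powr (- \<gamma> / 2)"
  have \<sigma>0: "\<sigma> > 0" using \<beta> by (simp add: \<sigma>_def)
  have "\<beta> powr (- \<gamma> / 2) < \<beta> powr 0" using \<beta> \<gamma> by (intro powr_less_mono) auto
  hence \<sigma>1: "\<sigma> < 1" unfolding \<sigma>_def using \<beta> by simp
  have termb: "(real d + 1) powr r * \<beta> powr (- \<gamma> * real d) \<le> A powr r * \<sigma> ^ d" for d
  proof -
    have "1 + real (d + 1) * (t - 1) \<le> (1 + (t - 1)) ^ (d + 1)"
      using t1 by (intro Bernoulli_inequality) auto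
    hence "(real d + 1) * (t - 1) \<le> t ^ (d + 1)" by (simp add: add.commute)
    hence b1: "real d + 1 \<le> A * t ^ d" using t1 by (simp add: A_def field_simps)
    have "(real d + 1) powr r \<le> (A * t ^ d) powr r"
      using b1 r by (intro powr_mono2) auto
    also have "\<dots> = A powr r * t powr (r * real d)"
      using A0 t1 by (simp add: powr_mult powr_realpow[symmetric] powr_powr mult.commute)
    also have "t powr (r * real d) = \<beta> powr (\<gamma> * r * real d / (2 * (r + 1)))"
      unfolding t_def powr_powr by (simp add: mult.assoc)
    finally have "(real d + 1) powr r * \<beta> powr (- \<gamma> * real d) \<le>
        A powr r * \<beta> powr (\<gamma> * r * real d / (2 * (r + 1))) * \<beta> powr (- \<gamma> * real d)"
      by (intro mult_right_mono) auto
    also have "\<dots> = A powr r * \<beta> powr (\<gamma> * r * real d / (2 * (r + 1)) - \<gamma> * real d)"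
      by (simp add: powr_add[symmetric] mult.assoc)
    also have "\<dots> \<le> A powr r * \<beta> powr (- \<gamma> / 2 * real d)"
    proof -
      have "r / (2 * (r + 1)) \<le> 1 / 2" using r by (simp add: field_simps)
      hence "\<gamma> * real d * (r / (2 * (r + 1))) \<le> \<gamma> * real d * (1 / 2)"
        using \<gamma> by (intro mult_left_mono) auto
      hence "\<gamma> * r * real d / (2 * (r + 1)) - \<gamma> * real d \<le> - \<gamma> / 2 * real d"
        by (simp add: field_simps)
      thus ?thesis using \<beta> by (intro mult_left_mono) auto
    qed
    also have "\<beta> powr (- \<gamma> / 2 * real d) = \<sigma> ^ d"
    proof -
      have "\<sigma> ^ d = \<sigma> powr real d" using \<sigma>0 by (simp add: powr_realpow)
      also have "\<dots> = \<beta> powr (- \<gamma> / 2 * real d)" unfolding \<sigma>_def powr_powr ..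
      finally show ?thesis by simp
    qed
    finally show ?thesis .
  qed
  have "(\<Sum>d\<le>L. (real d + 1) powr r * \<beta> powr (- \<gamma> * real d)) \<le> A powr r / (1 - \<sigma>)" for L
  proof -
    have "(\<Sum>d\<le>L. (real d + 1) powr r * \<beta> powr (- \<gamma> * real d)) \<le> (\<Sum>d\<le>L. A powr r * \<sigma> ^ d)"
      by (intro sum_mono termb)
    also have "\<dots> = A powr r * (\<Sum>d\<le>L. \<sigma> ^ d)" by (simp add: sum_distrib_left)
    also have "(\<Sum>d\<le>L. \<sigma> ^ d) \<le> 1 / (1 - \<sigma>)"
    proof -
      have "(1 - \<sigma>) * (\<Sum>d\<le>L. \<sigma> ^ d) = 1 - \<sigma> ^ Suc L" by (rule sum_gp_basic)
      also have "\<dots> \<le> 1" using \<sigma>0 by simp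
      finally show ?thesis using \<sigma>1 by (simp add: field_simps)
    qed
    hence "A powr r * (\<Sum>d\<le>L. \<sigma> ^ d) \<le> A powr r * (1 / (1 - \<sigma>))" by (intro mult_left_mono) auto
    finally show ?thesis by simp
  qed
  moreover have "A powr r / (1 - \<sigma>) > 0" using A0 \<sigma>1 by simp
  ultimately show ?thesis by blast
qed

lemma cube_eq: "cube s = PiM {..<s} (\<lambda>_. M1)" by (simp add: cube_def M1_def)

lemma psf_M1: "product_sigma_finite (\<lambda>_::nat. M1)"
  using finite_measure_M1 by (auto simp: product_sigma_finite_def finite_measure_def)

lemma cube_prod1:
  fixes F :: "nat \<Rightarrow> real \<Rightarrow> real"
  assumes "\<And>l. l < s \<Longrightarrow> integrable M1 (F l)"
  shows "integrable (cube s) (\<lambda>x. \<Prod>l<s. F l (x l))"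
  unfolding cube_eq
  by (rule product_sigma_finite.product_integrable_prod[OF psf_M1, of "{..<s}" F]) (use assms in auto)

lemma cube_prod2:
  fixes F :: "nat \<Rightarrow> real \<Rightarrow> real"
  assumes "\<And>l. l < s \<Longrightarrow> integrable M1 (F l)"
  shows "integral\<^sup>L (cube s) (\<lambda>x. \<Prod>l<s. F l (x l)) = (\<Prod>l<s. integral\<^sup>L M1 (F l))"
  unfolding cube_eq
  by (rule product_sigma_finite.product_integral_prod[OF psf_M1, of "{..<s}" F]) (use assms in auto)

lemmas cube_prod = cube_prod1 cube_prod2

definition box :: "nat \<Rightarrow> nat \<Rightarrow> (nat \<Rightarrow> nat) \<Rightarrow> (nat \<Rightarrow> nat) \<Rightarrow> (nat \<Rightarrow> real) \<Rightarrow> real" where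
  "box b s j k x = (\<Prod>l<s. ind b (j l) (k l) (x l))"

lemma box_Haar:
  assumes "b \<ge> 2"
  shows "integrable (cube s) (\<lambda>x. box b s j k x * Haar b s m i k' x)"
    and "integral\<^sup>L (cube s) (\<lambda>x. box b s j k x * Haar b s m i k' x) =
          (\<Prod>l<s. integral\<^sup>L M1 (\<lambda>y. ind b (j l) (k l) y * haar b (m l) (i l) (k' l) y))"
proof -
  have eq: "(\<lambda>x. box b s j k x * Haar b s m i k' x) = (\<lambda>x. \<Prod>l<s. ind b (j l) (k l) (x l) * haar b (m l) (i l) (k' l) (x l))"
    by (simp add: box_def Haar_def prod.distrib)
  show "integrable (cube s) (\<lambda>x. box b s j k x * Haar b s m i k' x)"
    unfolding eq using assms by (intro cube_prod(1) integrable_ind_haar)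
  show "integral\<^sup>L (cube s) (\<lambda>x. box b s j k x * Haar b s m i k' x) =
          (\<Prod>l<s. integral\<^sup>L M1 (\<lambda>y. ind b (j l) (k l) y * haar b (m l) (i l) (k' l) y))"
    unfolding eq using assms by (intro cube_prod(2) integrable_ind_haar)
qed

lemma box_int:
  assumes "b \<ge> 1" "\<And>l. l < s \<Longrightarrow> k l < b ^ (j l)"
  shows "integrable (cube s) (box b s j k)"
    and "integral\<^sup>L (cube s) (box b s j k) = 1 / real b ^ (\<Sum>l<s. j l)"
proof -
  have eq: "box b s j k = (\<lambda>x. \<Prod>l<s. ind b (j l) (k l) (x l))" by (simp add: box_def fun_eq_iff)
  show "integrable (cube s) (box b s j k)"
    unfolding eq using assms by (intro cube_prod(1) integrable_ind)
  have "integral\<^sup>L (cube s) (box b s j k) = (\<Prod>l<s. integral\<^sup>L M1 (ind b (j l) (k l)))"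
    unfolding eq using assms by (intro cube_prod(2) integrable_ind)
  also have "\<dots> = (\<Prod>l<s. 1 / real b ^ j l)"
    using assms by (intro prod.cong refl integral_ind_M1) auto
  also have "\<dots> = 1 / real b ^ (\<Sum>l<s. j l)"
    by (simp add: prod_dividef power_sum)
  finally show "integral\<^sup>L (cube s) (box b s j k) = 1 / real b ^ (\<Sum>l<s. j l)" .
qed

lemma coef_sum_bound:
  assumes b: "b \<ge> 2" and ki: "(k', i) \<in> kiset b s m"
  shows "(\<Sum>k\<in>PiE {..<s} (\<lambda>l. {..<b ^ (j l)}).
            \<bar>\<Prod>l<s. integral\<^sup>L M1 (\<lambda>y. ind b (j l) (k l) y * haar b (m l) (i l) (k' l) y)\<bar>)
         \<le> (if \<forall>l<s. m l \<le> j l then 2 ^ s * real b powr (- real (\<Sum>l<s. m l) / 2) else 0)"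
proof -
  define c where "c l kk = integral\<^sup>L M1 (\<lambda>y. ind b (j l) kk y * haar b (m l) (i l) (k' l) y)" for l kk
  have rk: "k' l < b ^ (m l - 1)" and ri: "i l < b" if "l < s" for l
  proof -
    have "k' l \<in> delta_m1 b (m l)" "i l \<in> nabla b (m l)"
      using ki that by (auto simp: kiset_def PiE_def Pi_def)
    thus "k' l < b ^ (m l - 1)" "i l < b" using b by (auto simp: delta_m1_def nabla_def split: if_splits)
  qed
  have "(\<Sum>k\<in>PiE {..<s} (\<lambda>l. {..<b ^ (j l)}). \<bar>\<Prod>l<s. c l (k l)\<bar>)
        = (\<Sum>k\<in>PiE {..<s} (\<lambda>l. {..<b ^ (j l)}). \<Prod>l<s. \<bar>c l (k l)\<bar>)"
    by (simp add: abs_prod)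
  also have "\<dots> = (\<Prod>l<s. \<Sum>kk<b ^ (j l). \<bar>c l kk\<bar>)"
    by (rule prod_sum_PiE[symmetric]) auto
  also have "\<dots> \<le> (if \<forall>l<s. m l \<le> j l then 2 ^ s * real b powr (- real (\<Sum>l<s. m l) / 2) else 0)"
  proof (cases "\<forall>l<s. m l \<le> j l")
    case False
    then obtain l where l: "l < s" "j l < m l" by auto
    have "c l kk = 0" for kk unfolding c_def using b l rk[OF l(1)] ri[OF l(1)] by (intro coef_vanish) auto
    hence "(\<Sum>kk<b ^ (j l). \<bar>c l kk\<bar>) = 0" by simp
    hence P0: "(\<Prod>l<s. \<Sum>kk<b ^ (j l). \<bar>c l kk\<bar>) = 0" using l by (intro prod_zero) auto
    show ?thesis using False by (subst P0) simp
  next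
    case True
    have "(\<Prod>l<s. \<Sum>kk<b ^ (j l). \<bar>c l kk\<bar>) \<le> (\<Prod>l<s. 2 * real b powr (- real (m l) / 2))"
    proof (rule prod_mono)
      fix l assume "l \<in> {..<s}"
      hence l: "l < s" by simp
      have "(\<Sum>kk<b ^ (j l). \<bar>c l kk\<bar>) \<le> integral\<^sup>L M1 (\<lambda>x. \<bar>haar b (m l) (i l) (k' l) x\<bar>)"
        unfolding c_def using b by (intro sum_coef_le[OF _ haar_measurable haar_bound]) auto
      also have "\<dots> \<le> 2 * real b powr (- real (m l) / 2)"
        using b rk[OF l] ri[OF l] by (intro haar_L1) auto
      finally show "0 \<le> (\<Sum>kk<b ^ (j l). \<bar>c l kk\<bar>) \<and> (\<Sum>kk<b ^ (j l). \<bar>c l kk\<bar>) \<le> 2 * real b powr (- real (m l) / 2)"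
        by (auto intro: sum_nonneg)
    qed
    also have "\<dots> = 2 ^ s * real b powr (- real (\<Sum>l<s. m l) / 2)"
    proof -
      have "(\<Prod>l<s. 2 * real b powr (- real (m l) / 2)) = 2 ^ s * (\<Prod>l<s. real b powr (- real (m l) / 2))"
        by (simp add: prod.distrib)
      also have "(\<Prod>l<s. real b powr (- real (m l) / 2)) = real b powr (\<Sum>l<s. - real (m l) / 2)"
        using b by (simp add: powr_sum)
      also have "(\<Sum>l<s. - real (m l) / 2) = - real (\<Sum>l<s. m l) / 2"
        by (simp add: sum_negf sum_divide_distrib)
      finally show ?thesis .
    qed
    finally show ?thesis using True by simp
  qed
  finally show ?thesis unfolding c_def .
qed



lemma finite_levels: "finite (levels s L)"
proof -
  have "levels s L \<subseteq> PiE {..<s} (\<lambda>_. {..L})" by (auto simp: levels_def)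
  thus ?thesis by (rule finite_subset) (auto intro: finite_PiE)
qed

lemma levels_sum: "j \<in> levels s L \<Longrightarrow> (\<Sum>l<s. j l) = L"
  by (simp add: levels_def)

lemma levels_ext: "j \<in> levels s L \<Longrightarrow> l \<ge> s \<Longrightarrow> j l = undefined"
  by (auto simp: levels_def PiE_def extensional_def)

lemma levels_le: "j \<in> levels s L \<Longrightarrow> l < s \<Longrightarrow> j l \<le> L"
  by (auto simp: levels_def PiE_def)

lemma levels_intro: "(\<And>l. l < s \<Longrightarrow> j l \<le> L) \<Longrightarrow> (\<And>l. l \<ge> s \<Longrightarrow> j l = undefined) \<Longrightarrow> (\<Sum>l<s. j l) = L \<Longrightarrow> j \<in> levels s L"
  by (auto simp: levels_def PiE_def extensional_def)

lemma card_kiset: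
  assumes "b \<ge> 1"
  shows "card (kiset b s m) = b ^ (\<Sum>l<s. m l)"
proof -
  have "card (kiset b s m) = (\<Prod>l<s. card (delta_m1 b (m l))) * (\<Prod>l<s. card (nabla b (m l)))"
    by (simp add: kiset_def card_cartesian_product card_PiE)
  also have "\<dots> = (\<Prod>l<s. card (delta_m1 b (m l)) * card (nabla b (m l)))"
    by (simp add: prod.distrib)
  also have "\<dots> = (\<Prod>l<s. b ^ m l)"
  proof (rule prod.cong[OF refl])
    fix l
    show "card (delta_m1 b (m l)) * card (nabla b (m l)) = b ^ m l"
      by (cases "m l") (auto simp: delta_m1_def nabla_def)
  qed
  also have "\<dots> = b ^ (\<Sum>l<s. m l)" by (simp add: power_sum)
  finally show ?thesis .
qed

lemma finite_kiset: "finite (kiset b s m)"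
  by (auto simp: kiset_def delta_m1_def nabla_def intro!: finite_PiE)

lemma kiset_ne:
  assumes "b \<ge> 1"
  shows "kiset b s m \<noteq> {}"
proof -
  have "(\<lambda>l\<in>{..<s}. 0, \<lambda>l\<in>{..<s}. 0) \<in> kiset b s m"
    using assms by (auto simp: kiset_def delta_m1_def nabla_def)
  thus ?thesis by blast
qed

lemma card_dominating:
  assumes s: "s \<ge> 1" and m: "(\<Sum>l<s. m l) = L'" and LL: "L' \<le> L"
  shows "card {j \<in> levels s L. \<forall>l<s. m l \<le> j l} \<le> (L - L' + 1) ^ (s - 1)"
proof -
  define A where "A = {j \<in> levels s L. \<forall>l<s. m l \<le> j l}"
  define \<phi> where "\<phi> j = (\<lambda>l\<in>{1..<s}. j l - m l)" for j :: "nat \<Rightarrow> nat"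
  have inj: "inj_on \<phi> A"
  proof (rule inj_onI)
    fix j1 j2 assume j1: "j1 \<in> A" and j2: "j2 \<in> A" and eq: "\<phi> j1 = \<phi> j2"
    have a: "j1 l = j2 l" if "l \<in> {1..<s}" for l
    proof -
      have "\<phi> j1 l = \<phi> j2 l" using eq by simp
      hence "j1 l - m l = j2 l - m l" using that unfolding \<phi>_def by simp
      moreover have "m l \<le> j1 l" "m l \<le> j2 l" using j1 j2 that by (auto simp: A_def)
      ultimately show ?thesis by simp
    qed
    have sum1: "j1 0 + (\<Sum>l\<in>{1..<s}. j1 l) = L" and sum2: "j2 0 + (\<Sum>l\<in>{1..<s}. j2 l) = L"
    proof -
      have "{..<s} = insert 0 {1..<s}" using s by auto
      hence h: "(\<Sum>l<s. j l) = j 0 + (\<Sum>l\<in>{1..<s}. j l)" for j :: "nat \<Rightarrow> nat" by simp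
      have "j1 \<in> levels s L" "j2 \<in> levels s L" using j1 j2 by (auto simp: A_def)
      thus "j1 0 + (\<Sum>l\<in>{1..<s}. j1 l) = L" "j2 0 + (\<Sum>l\<in>{1..<s}. j2 l) = L"
        using h[of j1] h[of j2] levels_sum[of j1 s L] levels_sum[of j2 s L] by argo+
    qed
    have "(\<Sum>l\<in>{1..<s}. j1 l) = (\<Sum>l\<in>{1..<s}. j2 l)" using a by (rule sum.cong[OF refl])
    hence a0: "j1 0 = j2 0" using sum1 sum2 by simp
    show "j1 = j2"
    proof
      fix l
      show "j1 l = j2 l"
      proof (cases "l < s")
        case True
        thus ?thesis using a a0 by (cases "l = 0") auto
      next
        case False
        thus ?thesis using j1 j2 levels_ext[of j1 s L l] levels_ext[of j2 s L l] by (auto simp: A_def)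
      qed
    qed
  qed
  have img: "\<phi> ` A \<subseteq> PiE {1..<s} (\<lambda>_. {..L - L'})"
  proof
    fix y assume "y \<in> \<phi> ` A"
    then obtain j where j: "j \<in> A" and y: "y = \<phi> j" by auto
    have jm: "m l \<le> j l" if "l < s" for l using j that by (auto simp: A_def)
    have sj: "(\<Sum>l<s. j l) = L" using j by (auto simp: A_def levels_sum)
    have "j l - m l \<le> L - L'" if l: "l < s" for l
    proof -
      have "(\<Sum>l'<s. j l') = j l + (\<Sum>l'\<in>{..<s} - {l}. j l')" using l by (subst sum.remove[of _ l]) auto
      moreover have "(\<Sum>l'<s. m l') = m l + (\<Sum>l'\<in>{..<s} - {l}. m l')" using l by (subst sum.remove[of _ l]) auto
      moreover have "(\<Sum>l'\<in>{..<s} - {l}. m l') \<le> (\<Sum>l'\<in>{..<s} - {l}. j l')" using jm by (intro sum_mono) auto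
      ultimately show ?thesis using sj m by linarith
    qed
    thus "y \<in> PiE {1..<s} (\<lambda>_. {..L - L'})" unfolding y \<phi>_def by auto
  qed
  have "card A \<le> card (PiE {1..<s} (\<lambda>_. {..L - L'}))"
    using inj img by (intro card_inj_on_le) (auto intro: finite_PiE)
  also have "\<dots> = (L - L' + 1) ^ (s - 1)" by (simp add: card_PiE)
  finally show ?thesis unfolding A_def .
qed

lemma dominating_empty:
  assumes m: "(\<Sum>l<s. m l) > L"
  shows "{j \<in> levels s L. \<forall>l<s. m l \<le> j l} = {}"
proof -
  { fix j assume j: "j \<in> levels s L" "\<forall>l<s. m l \<le> j l"
    hence "(\<Sum>l<s. m l) \<le> (\<Sum>l<s. j l)" by (intro sum_mono) auto
    with j m have False by (simp add: levels_sum) }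
  thus ?thesis by auto
qed

lemma card_levels_mono:
  assumes s: "s \<ge> 1" and LL: "L' \<le> L"
  shows "card (levels s L') \<le> card (levels s L)"
proof -
  define \<psi> where "\<psi> m = m(0 := m 0 + (L - L'))" for m :: "nat \<Rightarrow> nat"
  have "inj_on \<psi> (levels s L')"
  proof (rule inj_onI)
    fix m1 m2 assume "\<psi> m1 = \<psi> m2"
    hence e: "\<psi> m1 l = \<psi> m2 l" for l by simp
    have "m1 l = m2 l" for l
    proof (cases "l = 0")
      case True
      thus ?thesis using e[of 0] unfolding \<psi>_def by simp
    next
      case False
      thus ?thesis using e[of l] unfolding \<psi>_def by simp
    qed
    thus "m1 = m2" by auto
  qed
  moreover have "\<psi> ` levels s L' \<subseteq> levels s L"
  proof
    fix y assume "y \<in> \<psi> ` levels s L'"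
    then obtain m where m: "m \<in> levels s L'" and y: "y = \<psi> m" by auto
    have sm: "(\<Sum>l<s. m l) = L'" using m by (simp add: levels_sum)
    have "(\<Sum>l<s. y l) = (\<Sum>l<s. m l + (if l = 0 then L - L' else 0))"
      unfolding y \<psi>_def by (intro sum.cong) auto
    also have "\<dots> = L" using s sm LL by (simp add: sum.distrib)
    finally have sy: "(\<Sum>l<s. y l) = L" .
    show "y \<in> levels s L"
    proof (rule levels_intro)
      fix l assume "l < s"
      have "y l \<le> (\<Sum>l<s. y l)" using \<open>l < s\<close> by (intro member_le_sum) auto
      thus "y l \<le> L" using sy by simp
    next
      fix l assume "s \<le> l"
      thus "y l = undefined" using s levels_ext[OF m] unfolding y \<psi>_def by auto
    qed (rule sy)
  qed
  ultimately show ?thesis by (intro card_inj_on_le finite_levels)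
qed

lemma card_levels_lower:
  assumes s: "s \<ge> 1"
  shows "(real L / real s) ^ (s - 1) \<le> real (card (levels s L))"
proof -
  define K where "K = L div s + 1"
  define cf where "cf d = (\<lambda>l. if l = 0 then L - (\<Sum>l'\<in>{1..<s}. d l') else if l < s then d l else undefined)" for d :: "nat \<Rightarrow> nat"
  define D where "D = PiE {1..<s} (\<lambda>_. {..<K})"
  have sumD: "(\<Sum>l'\<in>{1..<s}. d l') \<le> L" if d: "d \<in> D" for d
  proof -
    have "(\<Sum>l'\<in>{1..<s}. d l') \<le> (\<Sum>l'\<in>{1..<s}. L div s)"
      using d by (intro sum_mono) (auto simp: D_def K_def PiE_def Pi_def less_Suc_eq_le)
    also have "\<dots> = (s - 1) * (L div s)" by simp
    also have "\<dots> \<le> s * (L div s)" by simp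
    also have "\<dots> \<le> L" by simp
    finally show ?thesis .
  qed
  have inj: "inj_on cf D"
  proof (rule inj_onI)
    fix d1 d2 assume d1: "d1 \<in> D" and d2: "d2 \<in> D" and eq: "cf d1 = cf d2"
    show "d1 = d2"
    proof
      fix l
      show "d1 l = d2 l"
      proof (cases "l \<in> {1..<s}")
        case True
        have "cf d1 l = cf d2 l" using eq by simp
        thus ?thesis using True unfolding cf_def by simp
      next
        case False
        thus ?thesis using d1 d2 by (auto simp: D_def PiE_def extensional_def)
      qed
    qed
  qed
  have img: "cf ` D \<subseteq> levels s L"
  proof
    fix y assume "y \<in> cf ` D"
    then obtain d where d: "d \<in> D" and y: "y = cf d" by auto
    have "{..<s} = insert 0 {1..<s}" using s by auto
    hence "(\<Sum>l<s. y l) = y 0 + (\<Sum>l\<in>{1..<s}. y l)" by simp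
    also have "(\<Sum>l\<in>{1..<s}. y l) = (\<Sum>l\<in>{1..<s}. d l)" unfolding y cf_def by (intro sum.cong) auto
    also have "y 0 = L - (\<Sum>l'\<in>{1..<s}. d l')" unfolding y cf_def by simp
    finally have sy: "(\<Sum>l<s. y l) = L" using sumD[OF d] by simp
    show "y \<in> levels s L"
    proof (rule levels_intro)
      fix l assume "l < s"
      have "y l \<le> (\<Sum>l<s. y l)" using \<open>l < s\<close> by (intro member_le_sum) auto
      thus "y l \<le> L" using sy by simp
    next
      fix l assume "s \<le> l"
      thus "y l = undefined" using s unfolding y cf_def by auto
    qed (rule sy)
  qed
  have "card D \<le> card (levels s L)"
    using inj img by (intro card_inj_on_le finite_levels)
  moreover have "card D = K ^ (s - 1)" by (simp add: D_def card_PiE)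
  moreover have "real L / real s \<le> real K"
  proof -
    have h1: "L mod s < s" using s by simp
    have h2: "s * (L div s) + L mod s = L" by (rule mult_div_mod_eq)
    have h3: "s * K = s * (L div s) + s" by (simp add: K_def)
    have "L < s * K" using h1 h2 h3 by linarith
    hence "real L < real s * real K" by (metis of_nat_less_iff of_nat_mult)
    thus ?thesis using s by (simp add: divide_le_eq mult.commute)
  qed
  ultimately show ?thesis
  proof -
    assume c1: "card D \<le> card (levels s L)" and c2: "card D = K ^ (s - 1)" and c3: "real L / real s \<le> real K"
    have "(real L / real s) ^ (s - 1) \<le> real K ^ (s - 1)" using c3 by (intro power_mono) auto
    also have "\<dots> = real (card D)" using c2 by simp
    also have "\<dots> \<le> real (card (levels s L))" using c1 by simp
    finally show ?thesis .
  qed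
qed



lemma ind_Vj:
  assumes b: "b \<ge> 1" and k: "k < b ^ j"
  shows "ind b j k \<in> Vj b j"
  unfolding Vj_def
proof (intro CollectI exI[of _ "\<lambda>n. if n = k then 1 else 0"] allI)
  fix x :: real
  show "ind b j k x = (if 0 \<le> x \<and> x < 1 then (if nat \<lfloor>real b ^ j * x\<rfloor> = k then 1 else 0) else 0)"
  proof (cases "0 \<le> x \<and> x < 1")
    case True
    hence "\<lfloor>real b ^ j * x\<rfloor> \<ge> 0" using b by simp
    hence "(nat \<lfloor>real b ^ j * x\<rfloor> = k) = (\<lfloor>real b ^ j * x\<rfloor> = int k)" by auto
    thus ?thesis using True by (simp add: ind_def)
  next
    case False
    have bp: "real b ^ j > 0" using b by simp
    have "\<lfloor>real b ^ j * x\<rfloor> \<noteq> int k"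
    proof
      assume fl: "\<lfloor>real b ^ j * x\<rfloor> = int k"
      hence "real k \<le> real b ^ j * x" "real b ^ j * x < real k + 1" by linarith+
      moreover have "real k + 1 \<le> real b ^ j" using k
        by (metis Suc_leI of_nat_Suc of_nat_le_iff of_nat_power add.commute)
      ultimately have "0 \<le> real b ^ j * x" "real b ^ j * x < real b ^ j" by linarith+
      hence "0 \<le> x" "x < 1" using bp by (simp_all add: zero_le_mult_iff)
      thus False using False by simp
    qed
    thus ?thesis using False by (simp add: ind_def)
  qed
qed

lemma einv_range: "1 \<le> p \<Longrightarrow> 0 \<le> einv p \<and> einv p \<le> 1"
proof (cases p)
  case (real r)
  assume "1 \<le> p" thus ?thesis using real by (auto simp: einv_def)
qed (auto simp: einv_def)

lemma wterm_nonneg: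
  assumes b: "b \<ge> 1"
  shows "0 \<le> wterm b \<alpha> s p f m"
proof -
  obtain z where z: "z \<in> kiset b s m" using kiset_ne[OF b] by blast
  have "0 \<le> Max ((\<lambda>(kv, iv). \<bar>wcoef b s f m iv kv\<bar>) ` kiset b s m)"
  proof -
    define g where "g = (\<lambda>(kv, iv). \<bar>wcoef b s f m iv kv\<bar>)"
    have "0 \<le> g z" unfolding g_def by (cases z) simp
    also have "g z \<le> Max (g ` kiset b s m)" using z finite_kiset by (intro Max_ge) auto
    finally show ?thesis unfolding g_def .
  qed
  hence "0 \<le> inner_p b s p f m" unfolding inner_p_def by auto
  thus ?thesis unfolding wterm_def by simp
qed

lemma wterm_le:
  assumes b: "b \<ge> 2" and p: "1 \<le> p" and B: "B \<ge> 0"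
    and cb: "\<And>k' i. (k', i) \<in> kiset b s m \<Longrightarrow> \<bar>wcoef b s f m i k'\<bar> \<le> B"
  shows "wterm b \<alpha> s p f m \<le> real b powr ((\<alpha> + 1/2) * real (\<Sum>l<s. m l)) * B"
proof -
  define Lm where "Lm = (\<Sum>l<s. m l)"
  have b1: "b \<ge> 1" using b by simp
  have inner: "inner_p b s p f m \<le> real b powr (einv p * real Lm) * B"
  proof (cases "p = \<infinity>")
    case True
    have "Max ((\<lambda>(kv, iv). \<bar>wcoef b s f m iv kv\<bar>) ` kiset b s m) \<le> B"
      using cb kiset_ne[OF b1] finite_kiset by (subst Max_le_iff) auto
    thus ?thesis using True b1 by (simp add: inner_p_def einv_def)
  next
    case False
    then obtain pr where pr: "p = ereal pr" using p by (cases p) auto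
    have pr1: "pr \<ge> 1" using p pr by simp
    have sumb: "(\<Sum>(kv, iv)\<in>kiset b s m. \<bar>wcoef b s f m iv kv\<bar> powr pr) \<le> real (card (kiset b s m)) * B powr pr"
    proof -
      have "(\<Sum>(kv, iv)\<in>kiset b s m. \<bar>wcoef b s f m iv kv\<bar> powr pr) \<le> (\<Sum>_\<in>kiset b s m. B powr pr)"
        using cb pr1 by (intro sum_mono) (auto intro!: powr_mono2)
      thus ?thesis by simp
    qed
    have "inner_p b s p f m = (\<Sum>(kv, iv)\<in>kiset b s m. \<bar>wcoef b s f m iv kv\<bar> powr pr) powr (1 / pr)"
      using False pr by (simp add: inner_p_def)
    also have "\<dots> \<le> (real (card (kiset b s m)) * B powr pr) powr (1 / pr)"
      using sumb pr1 by (intro powr_mono2) (auto intro: sum_nonneg)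
    also have "\<dots> = real (card (kiset b s m)) powr (1 / pr) * B"
      using pr1 B by (simp add: powr_mult powr_powr)
    also have "real (card (kiset b s m)) = real b powr real Lm"
    proof -
      have "real (card (kiset b s m)) = real b ^ Lm" using b1 by (simp add: card_kiset Lm_def)
      also have "\<dots> = real b powr real Lm" using b1 by (subst powr_realpow) auto
      finally show ?thesis .
    qed
    also have "(real b powr real Lm) powr (1 / pr) = real b powr (einv p * real Lm)"
      using False pr by (simp add: powr_powr einv_def mult.commute)
    finally show ?thesis .
  qed
  have "wterm b \<alpha> s p f m = real b powr ((\<alpha> - einv p + 1/2) * real Lm) * inner_p b s p f m"
    by (simp add: wterm_def Lm_def)
  also have "\<dots> \<le> real b powr ((\<alpha> - einv p + 1/2) * real Lm) * (real b powr (einv p * real Lm) * B)"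
    by (intro mult_left_mono inner) simp
  also have "\<dots> = real b powr ((\<alpha> + 1/2) * real Lm) * B"
    by (simp add: mult.assoc[symmetric] powr_add[symmetric] algebra_simps)
  finally show ?thesis unfolding Lm_def .
qed



definition Kset :: "nat \<Rightarrow> nat \<Rightarrow> (nat \<Rightarrow> nat) \<Rightarrow> (nat \<Rightarrow> nat) set" where
  "Kset b s j = PiE {..<s} (\<lambda>l. {..<b ^ (j l)})"

definition Eset :: "nat \<Rightarrow> nat \<Rightarrow> nat \<Rightarrow> (nat \<Rightarrow> nat \<Rightarrow> real) \<Rightarrow> (nat \<Rightarrow> nat) \<Rightarrow> (nat \<Rightarrow> nat) set" where
  "Eset b s N x j = {k \<in> Kset b s j. \<forall>i<N. \<exists>l<s. \<lfloor>real b ^ (j l) * x i l\<rfloor> \<noteq> int (k l)}"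

definition Sset where "Sset b s N x L = Sigma (levels s L) (Eset b s N x)"

definition f0 :: "nat \<Rightarrow> nat \<Rightarrow> nat \<Rightarrow> (nat \<Rightarrow> nat \<Rightarrow> real) \<Rightarrow> nat \<Rightarrow> (nat \<Rightarrow> real) \<Rightarrow> real" where
  "f0 b s N x L y = (\<Sum>p\<in>Sset b s N x L. box b s (fst p) (snd p) y)"

lemma finite_Kset: "finite (Kset b s j)"
  by (auto simp: Kset_def intro!: finite_PiE)

lemma finite_Sset: "finite (Sset b s N x L)"
  unfolding Sset_def
  by (intro finite_SigmaI finite_levels) (auto simp: Eset_def intro: finite_subset[OF _ finite_Kset])

lemma Kset_lt: "k \<in> Kset b s j \<Longrightarrow> l < s \<Longrightarrow> k l < b ^ (j l)"
  by (auto simp: Kset_def PiE_def Pi_def)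

lemma card_Kset: "card (Kset b s j) = b ^ (\<Sum>l<s. j l)"
  by (simp add: Kset_def card_PiE power_sum)

lemma f0_Htilde:
  assumes b: "b \<ge> 1"
  shows "(\<lambda>y. a * f0 b s N x L y) \<in> Htilde b s"
proof -
  define S where "S = Sset b s N x L"
  obtain h where h: "bij_betw h {0..<card S} S" using ex_bij_betw_nat_finite[OF finite_Sset] unfolding S_def by blast
  have hS: "h t \<in> S" if "t < card S" for t using h that by (auto simp: bij_betw_def)
  have mem: "fst (h t) \<in> levels s L" "snd (h t) \<in> Kset b s (fst (h t))" if "t < card S" for t
    using hS[OF that] by (auto simp: S_def Sset_def Eset_def)
  show ?thesis unfolding Htilde_def
  proof (rule UN_I[of L], simp, unfold VsL_def, rule CollectI,
      rule exI[of _ "card S"], rule exI[of _ "\<lambda>_. a"], rule exI[of _ "\<lambda>t. fst (h t)"],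
      rule exI[of _ "\<lambda>t l. ind b (fst (h t) l) (snd (h t) l)"], intro conjI allI impI)
    fix t assume t: "t < card S"
    show "(\<Sum>l<s. fst (h t) l) = L" using mem(1)[OF t] by (rule levels_sum)
    fix l assume l: "l < s"
    show "ind b (fst (h t) l) (snd (h t) l) \<in> Vj b (fst (h t) l)"
      using b Kset_lt[OF mem(2)[OF t] l] by (rule ind_Vj)
  next
    have "(\<lambda>y. a * f0 b s N x L y) = (\<lambda>y. \<Sum>p\<in>S. a * box b s (fst p) (snd p) y)"
      by (simp add: f0_def S_def sum_distrib_left)
    also have "\<dots> = (\<lambda>y. \<Sum>t\<in>{0..<card S}. a * box b s (fst (h t)) (snd (h t)) y)"
      by (rule ext, rule sum.reindex_bij_betw[OF h, symmetric])
    also have "\<dots> = (\<lambda>y. \<Sum>t<card S. a * (\<Prod>l<s. ind b (fst (h t) l) (snd (h t) l) (y l)))"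
      by (simp add: box_def atLeast0LessThan)
    finally show "(\<lambda>y. a * f0 b s N x L y) = (\<lambda>y. \<Sum>t<card S. a * (\<Prod>l<s. ind b (fst (h t) l) (snd (h t) l) (y l)))" .
  qed
qed

lemma f0_points:
  assumes "i < N"
  shows "f0 b s N x L (x i) = 0"
proof -
  have "box b s j k (x i) = 0" if "(j, k) \<in> Sset b s N x L" for j k
  proof -
    from that assms obtain l where l: "l < s" "\<lfloor>real b ^ (j l) * x i l\<rfloor> \<noteq> int (k l)"
      by (auto simp: Sset_def Eset_def)
    hence "ind b (j l) (k l) (x i l) = 0" by (simp add: ind_def)
    thus ?thesis unfolding box_def using l by (intro prod_zero) auto
  qed
  thus ?thesis unfolding f0_def by (intro sum.neutral) auto
qed

lemma card_Eset:
  assumes b: "b \<ge> 1" and j: "j \<in> levels s L"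
  shows "b ^ L \<le> card (Eset b s N x j) + N"
proof -
  define g where "g i = restrict (\<lambda>l. nat \<lfloor>real b ^ (j l) * x i l\<rfloor>) {..<s}" for i
  have sub: "Kset b s j - Eset b s N x j \<subseteq> g ` {..<N}"
  proof
    fix k assume k: "k \<in> Kset b s j - Eset b s N x j"
    then obtain i where i: "i < N" and eq: "\<forall>l<s. \<lfloor>real b ^ (j l) * x i l\<rfloor> = int (k l)"
      by (auto simp: Eset_def)
    have "k = g i"
    proof
      fix l show "k l = g i l"
      proof (cases "l < s")
        case True thus ?thesis using eq by (simp add: g_def)
      next
        case False thus ?thesis using k by (auto simp: g_def Kset_def PiE_def extensional_def)
      qed
    qed
    thus "k \<in> g ` {..<N}" using i by blast
  qed
  have "b ^ L = card (Kset b s j)" using j by (simp add: card_Kset levels_sum)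
  also have "Kset b s j = Eset b s N x j \<union> (Kset b s j - Eset b s N x j)" by (auto simp: Eset_def)
  also have "card \<dots> \<le> card (Eset b s N x j) + card (Kset b s j - Eset b s N x j)"
    by (rule card_Un_le)
  also have "card (Kset b s j - Eset b s N x j) \<le> card (g ` {..<N})"
    using sub by (intro card_mono) auto
  also have "\<dots> \<le> N" using card_image_le[of "{..<N}" g] by simp
  finally show ?thesis by simp
qed

lemma Sset_Kset: "p \<in> Sset b s N x L \<Longrightarrow> snd p \<in> Kset b s (fst p)"
  by (auto simp: Sset_def Eset_def)

lemma Sset_levels: "p \<in> Sset b s N x L \<Longrightarrow> fst p \<in> levels s L"
  by (auto simp: Sset_def)

lemma f0_integrable:
  assumes b: "b \<ge> 1"
  shows "integrable (cube s) (f0 b s N x L)"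
proof -
  have "integrable (cube s) (\<lambda>y. \<Sum>p\<in>Sset b s N x L. box b s (fst p) (snd p) y)"
    using b Kset_lt[OF Sset_Kset] by (intro Bochner_Integration.integrable_sum box_int(1)) auto
  thus ?thesis by (simp add: f0_def[abs_def])
qed

lemma f0_integral:
  assumes b: "b \<ge> 1"
  shows "integral\<^sup>L (cube s) (f0 b s N x L) = (\<Sum>j\<in>levels s L. real (card (Eset b s N x j)) / real b ^ L)"
proof -
  have "integral\<^sup>L (cube s) (f0 b s N x L) = integral\<^sup>L (cube s) (\<lambda>y. \<Sum>p\<in>Sset b s N x L. box b s (fst p) (snd p) y)"
    by (simp add: f0_def[abs_def])
  also have "\<dots> = (\<Sum>p\<in>Sset b s N x L. integral\<^sup>L (cube s) (box b s (fst p) (snd p)))"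
    using b Kset_lt[OF Sset_Kset] by (intro Bochner_Integration.integral_sum box_int(1)) auto
  also have "\<dots> = (\<Sum>p\<in>Sset b s N x L. 1 / real b ^ L)"
  proof (rule sum.cong[OF refl])
    fix p assume p: "p \<in> Sset b s N x L"
    have "integral\<^sup>L (cube s) (box b s (fst p) (snd p)) = 1 / real b ^ (\<Sum>l<s. fst p l)"
      using b Kset_lt[OF Sset_Kset[OF p]] by (intro box_int(2)) auto
    also have "(\<Sum>l<s. fst p l) = L" using Sset_levels[OF p] by (rule levels_sum)
    finally show "integral\<^sup>L (cube s) (box b s (fst p) (snd p)) = 1 / real b ^ L" .
  qed
  also have "\<dots> = (\<Sum>j\<in>levels s L. \<Sum>k\<in>Eset b s N x j. 1 / real b ^ L)"
    unfolding Sset_def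
    by (subst sum.Sigma) (auto simp: finite_levels Eset_def intro: finite_subset[OF _ finite_Kset])
  also have "\<dots> = (\<Sum>j\<in>levels s L. real (card (Eset b s N x j)) / real b ^ L)" by simp
  finally show ?thesis .
qed

lemma f0_integral_ge:
  assumes b: "b \<ge> 1" and bL: "2 * N \<le> b ^ L"
  shows "real (card (levels s L)) / 2 \<le> integral\<^sup>L (cube s) (f0 b s N x L)"
proof -
  have "real (card (levels s L)) / 2 = (\<Sum>j\<in>levels s L. 1 / 2)" by simp
  also have "\<dots> \<le> (\<Sum>j\<in>levels s L. real (card (Eset b s N x j)) / real b ^ L)"
  proof (rule sum_mono)
    fix j assume j: "j \<in> levels s L"
    have c: "b ^ L \<le> card (Eset b s N x j) + N" using card_Eset[OF b j] .
    have bp: "real b ^ L > 0" using b by simp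
    have "real (b ^ L) \<le> real (card (Eset b s N x j)) + real N" using c by linarith
    moreover have "2 * real N \<le> real (b ^ L)" using bL by linarith
    ultimately have "real b ^ L \<le> 2 * real (card (Eset b s N x j))" by simp
    thus "1 / 2 \<le> real (card (Eset b s N x j)) / real b ^ L" using bp by (simp add: field_simps)
  qed
  also have "\<dots> = integral\<^sup>L (cube s) (f0 b s N x L)" using f0_integral[OF b] by simp
  finally show ?thesis .
qed

lemma f0_coef:
  assumes b: "b \<ge> 2" and a: "a \<ge> 0" and ki: "(k', i) \<in> kiset b s m"
  shows "\<bar>wcoef b s (\<lambda>y. a * f0 b s N x L y) m i k'\<bar>
     \<le> a * (2 ^ s * real b powr (- real (\<Sum>l<s. m l) / 2)) * real (card {j \<in> levels s L. \<forall>l<s. m l \<le> j l})"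
proof -
  define X where "X = 2 ^ s * real b powr (- real (\<Sum>l<s. m l) / 2)"
  define P where "P p = (\<Prod>l<s. integral\<^sup>L M1 (\<lambda>y. ind b (fst p l) (snd p l) y * haar b (m l) (i l) (k' l) y))" for p :: "(nat \<Rightarrow> nat) \<times> (nat \<Rightarrow> nat)"
  have "wcoef b s (\<lambda>y. a * f0 b s N x L y) m i k' =
      integral\<^sup>L (cube s) (\<lambda>y. \<Sum>p\<in>Sset b s N x L. a * (box b s (fst p) (snd p) y * Haar b s m i k' y))"
    unfolding wcoef_def f0_def by (simp only: mult.assoc sum_distrib_right sum_distrib_left)
  also have "\<dots> = (\<Sum>p\<in>Sset b s N x L. a * integral\<^sup>L (cube s) (\<lambda>y. box b s (fst p) (snd p) y * Haar b s m i k' y))"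
    using b by (subst Bochner_Integration.integral_sum) (auto intro: box_Haar(1))
  also have "\<dots> = (\<Sum>p\<in>Sset b s N x L. a * P p)"
    unfolding P_def using b by (intro sum.cong refl arg_cong2[where f="(*)"] box_Haar(2))
  finally have eq: "wcoef b s (\<lambda>y. a * f0 b s N x L y) m i k' = (\<Sum>p\<in>Sset b s N x L. a * P p)" .
  have "\<bar>\<Sum>p\<in>Sset b s N x L. a * P p\<bar> \<le> (\<Sum>p\<in>Sset b s N x L. a * \<bar>P p\<bar>)"
    by (rule order_trans[OF sum_abs]) (use a in \<open>simp add: abs_mult\<close>)
  also have "\<dots> = a * (\<Sum>j\<in>levels s L. \<Sum>k\<in>Eset b s N x j. \<bar>P (j, k)\<bar>)"
    unfolding Sset_def sum_distrib_left[symmetric]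
    by (subst sum.Sigma) (auto simp: finite_levels Eset_def intro: finite_subset[OF _ finite_Kset])
  also have "\<dots> \<le> a * (\<Sum>j\<in>levels s L. \<Sum>k\<in>Kset b s j. \<bar>P (j, k)\<bar>)"
  proof (rule mult_left_mono[OF sum_mono a])
    fix j
    show "(\<Sum>k\<in>Eset b s N x j. \<bar>P (j, k)\<bar>) \<le> (\<Sum>k\<in>Kset b s j. \<bar>P (j, k)\<bar>)"
      by (rule sum_mono2[OF finite_Kset]) (auto simp: Eset_def)
  qed
  also have "\<dots> \<le> a * (\<Sum>j\<in>levels s L. if \<forall>l<s. m l \<le> j l then X else 0)"
  proof (intro mult_left_mono sum_mono a)
    fix j
    show "(\<Sum>k\<in>Kset b s j. \<bar>P (j, k)\<bar>) \<le> (if \<forall>l<s. m l \<le> j l then X else 0)"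
      unfolding P_def X_def Kset_def using coef_sum_bound[OF b ki, of j] by simp
  qed
  also have "(\<Sum>j\<in>levels s L. if \<forall>l<s. m l \<le> j l then X else 0) = X * real (card {j \<in> levels s L. \<forall>l<s. m l \<le> j l})"
  proof -
    have "(\<Sum>j\<in>levels s L. if \<forall>l<s. m l \<le> j l then X else 0) = (\<Sum>j\<in>{j \<in> levels s L. \<forall>l<s. m l \<le> j l}. X)"
      by (rule sum.inter_filter[symmetric, OF finite_levels])
    thus ?thesis by simp
  qed
  finally show ?thesis unfolding eq X_def by (simp add: mult.assoc)
qed



lemma f0_wterm:
  assumes b: "b \<ge> 2" and a: "a \<ge> 0" and p: "1 \<le> p" and s: "s \<ge> 1"
  shows "wterm b \<alpha> s p (\<lambda>y. a * f0 b s N x L y) m \<le>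
    (if (\<Sum>l<s. m l) \<le> L then a * 2 ^ s * real (L - (\<Sum>l<s. m l) + 1) ^ (s - 1) * real b powr (\<alpha> * real (\<Sum>l<s. m l)) else 0)"
proof -
  define Lm where "Lm = (\<Sum>l<s. m l)"
  define C where "C = card {j \<in> levels s L. \<forall>l<s. m l \<le> j l}"
  have "wterm b \<alpha> s p (\<lambda>y. a * f0 b s N x L y) m \<le> real b powr ((\<alpha> + 1/2) * real Lm) * (a * (2 ^ s * real b powr (- real Lm / 2)) * real C)"
    unfolding Lm_def C_def using b p a
    by (intro wterm_le f0_coef) auto
  also have "\<dots> = a * 2 ^ s * real C * (real b powr ((\<alpha> + 1/2) * real Lm) * real b powr (- real Lm / 2))"
    by (simp add: algebra_simps)
  also have "real b powr ((\<alpha> + 1/2) * real Lm) * real b powr (- real Lm / 2) = real b powr (\<alpha> * real Lm)"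
    by (simp add: powr_add[symmetric] algebra_simps)
  finally have w: "wterm b \<alpha> s p (\<lambda>y. a * f0 b s N x L y) m \<le> a * 2 ^ s * real C * real b powr (\<alpha> * real Lm)" .
  show ?thesis
  proof (cases "Lm \<le> L")
    case True
    have "C \<le> (L - Lm + 1) ^ (s - 1)" unfolding C_def using s True by (intro card_dominating) (auto simp: Lm_def)
    hence "real C \<le> real (L - Lm + 1) ^ (s - 1)" by (metis of_nat_le_iff of_nat_power)
    hence "a * 2 ^ s * real C * real b powr (\<alpha> * real Lm) \<le> a * 2 ^ s * real (L - Lm + 1) ^ (s - 1) * real b powr (\<alpha> * real Lm)"
      using a by (intro mult_right_mono mult_left_mono) auto
    thus ?thesis using w True unfolding Lm_def by simp
  next
    case False
    hence "{j \<in> levels s L. \<forall>l<s. m l \<le> j l} = {}" unfolding Lm_def by (intro dominating_empty) simp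
    hence "C = 0" unfolding C_def by (simp only: card.empty)
    thus ?thesis using w False unfolding Lm_def by simp
  qed
qed

lemma levels_ne:
  assumes s: "s \<ge> 1"
  shows "levels s L \<noteq> {}"
proof -
  define w where "w l = (if l = 0 then L else if l < s then 0 else undefined)" for l :: nat
  have "{..<s} = insert 0 {1..<s}" using s by auto
  hence "(\<Sum>l<s. w l) = w 0 + (\<Sum>l\<in>{1..<s}. w l)" by simp
  also have "(\<Sum>l\<in>{1..<s}. w l) = 0" by (simp add: w_def)
  finally have "(\<Sum>l<s. w l) = L" by (simp add: w_def)
  hence "w \<in> levels s L" using s by (intro levels_intro) (auto simp: w_def)
  thus ?thesis by blast
qed

lemma reindex_rev:
  fixes L :: nat and g :: "nat \<Rightarrow> real"
  shows "(\<Sum>L'\<le>L. g (L - L')) = (\<Sum>d\<le>L. g d)"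
proof -
  have "(\<Sum>L'\<le>L. g (L - L')) = (\<Sum>L'<Suc L. g (Suc L - Suc L'))" by (simp add: lessThan_Suc_atMost)
  also have "\<dots> = (\<Sum>d<Suc L. g d)" by (rule sum.nat_diff_reindex)
  finally show ?thesis by (simp add: lessThan_Suc_atMost)
qed

lemma aux_one:
  fixes u v w t :: real
  assumes "u > 0" "v > 0" "w > 0" "t > 0"
  shows "(1 / (u * v * w * t) * u * w) * v * t = 1"
  using assms by (simp add: field_simps)

lemma f0_norm:
  fixes R K a :: real
  assumes b: "b \<ge> 2" and s: "s \<ge> 1" and q: "1 \<le> q" and p: "1 \<le> p" and K: "K > 0"
    and R_def: "R = (if q = \<infinity> then 1 else real_of_ereal q)"
    and Kp: "\<And>L. (\<Sum>d\<le>L. (real d + 1) powr (real (s - 1) * R) * real b powr (- (R * \<alpha>) * real d)) \<le> K"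
    and a_def: "a = 1 / (2 ^ s * K powr (1 / R) * real b powr (\<alpha> * real L) * real (card (levels s L)) powr einv q)"
  shows "wav_norm b \<alpha> s p q (\<lambda>y. a * f0 b s N x L y) \<le> 1"
proof -
  define nJ where "nJ = real (card (levels s L))"
  have nJ: "nJ > 0" unfolding nJ_def using levels_ne[OF s] finite_levels by (simp add: card_gt_0_iff)
  have b1: "real b > 1" using b by simp
  define e where "e = einv q"
  have R1: "R \<ge> 1" using q unfolding R_def by (cases q) auto
  have a0: "a > 0" unfolding a_def using K nJ b unfolding nJ_def by simp
  define Z where "Z = a * 2 ^ s * real b powr (\<alpha> * real L)"
  have Z0: "Z > 0" unfolding Z_def using a0 b by simp
  have key: "Z * K powr (1 / R) * nJ powr e = 1"
    unfolding Z_def a_def e_def nJ_def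
    by (rule aux_one) (use K nJ b in \<open>simp_all add: nJ_def\<close>)
  define W where "W m = wterm b \<alpha> s p (\<lambda>y. a * f0 b s N x L y) m" for m
  define G where "G d = (real d + 1) powr (real (s - 1) * R) * real b powr (- (R * \<alpha>) * real d)" for d :: nat
  have W0: "W m \<ge> 0" for m unfolding W_def using b by (intro wterm_nonneg) auto
  have Wbig: "W m = 0" if "(\<Sum>l<s. m l) > L" for m
    using f0_wterm[OF b less_imp_le[OF a0] p s, of \<alpha> N x L m] that W0[of m] unfolding W_def by simp
  have Wsmall: "W m \<le> Z * ((real (L - (\<Sum>l<s. m l)) + 1) ^ (s - 1) * real b powr (- \<alpha> * real (L - (\<Sum>l<s. m l))))"
    if "(\<Sum>l<s. m l) \<le> L" for m
  proof -
    define Lm where "Lm = (\<Sum>l<s. m l)"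
    have LmL: "Lm \<le> L" using that by (simp add: Lm_def)
    have "W m \<le> a * 2 ^ s * real (L - Lm + 1) ^ (s - 1) * real b powr (\<alpha> * real Lm)"
      using f0_wterm[OF b less_imp_le[OF a0] p s, of \<alpha> N x L m] LmL unfolding W_def Lm_def by simp
    also have "real b powr (\<alpha> * real Lm) = real b powr (\<alpha> * real L) * real b powr (- \<alpha> * real (L - Lm))"
      using LmL by (simp add: powr_add[symmetric] of_nat_diff algebra_simps)
    also have "real (L - Lm + 1) = real (L - Lm) + 1" by simp
    finally show ?thesis unfolding Z_def Lm_def by (simp add: algebra_simps)
  qed
  have Hpow: "(Z * ((real d + 1) ^ (s - 1) * real b powr (- \<alpha> * real d))) powr R = Z powr R * G d" for d :: nat
  proof -
    have "((real d + 1) ^ (s - 1)) powr R = (real d + 1) powr (real (s - 1) * R)"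
      by (simp add: powr_realpow[symmetric] powr_powr)
    moreover have "(real b powr (- \<alpha> * real d)) powr R = real b powr (- (R * \<alpha>) * real d)"
      by (simp add: powr_powr algebra_simps)
    ultimately show ?thesis using Z0 by (simp add: powr_mult G_def)
  qed
  have G0: "G d \<ge> 0" for d by (simp add: G_def)
  show ?thesis
  proof (cases "q = \<infinity>")
    case True
    hence R: "R = 1" and e0: "e = 0" by (simp_all add: R_def e_def einv_def)
    have ZK: "Z * K = 1" using key R e0 K nJ by simp
    have "ereal (W m) \<le> 1" for m
    proof (cases "(\<Sum>l<s. m l) \<le> L")
      case False thus ?thesis using Wbig by simp
    next
      case True
      define d where "d = L - (\<Sum>l<s. m l)"
      have "W m \<le> Z * ((real d + 1) ^ (s - 1) * real b powr (- \<alpha> * real d))"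
        using Wsmall[OF True] by (simp add: d_def)
      also have "(real d + 1) ^ (s - 1) * real b powr (- \<alpha> * real d) = G d"
        using R by (simp add: G_def powr_realpow)
      also have "G d \<le> (\<Sum>d'\<le>d. G d')" using G0 by (intro member_le_sum) auto
      also have "\<dots> \<le> K" using Kp[of d] by (simp add: G_def)
      finally have "W m \<le> Z * K" using Z0 by simp
      thus ?thesis using ZK by simp
    qed
    thus ?thesis using True unfolding wav_norm_def W_def by (auto intro: SUP_least)
  next
    case False
    then obtain qr where qr: "q = ereal qr" using q by (cases q) auto
    have R: "R = qr" using qr by (simp add: R_def)
    have e: "e = 1 / R" using qr R by (simp add: e_def einv_def)
    define T where "T L' = (\<Sum>m\<in>levels s L'. W m powr R)" for L'
    have T0: "T L' \<ge> 0" for L' unfolding T_def by (intro sum_nonneg) auto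
    have Tbig: "T L' = 0" if "L' > L" for L'
      unfolding T_def using Wbig levels_sum that R1 by (intro sum.neutral) auto
    have Tsmall: "T L' \<le> nJ * (Z powr R * G (L - L'))" if LL: "L' \<le> L" for L'
    proof -
      have "T L' \<le> (\<Sum>m\<in>levels s L'. Z powr R * G (L - L'))"
        unfolding T_def
      proof (rule sum_mono)
        fix m assume m: "m \<in> levels s L'"
        have sm: "(\<Sum>l<s. m l) = L'" using m by (rule levels_sum)
        have "W m powr R \<le> (Z * ((real (L - L') + 1) ^ (s - 1) * real b powr (- \<alpha> * real (L - L')))) powr R"
          using Wsmall[of m] sm LL W0 R1 by (intro powr_mono2) auto
        also have "\<dots> = Z powr R * G (L - L')" by (rule Hpow)
        finally show "W m powr R \<le> Z powr R * G (L - L')" .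
      qed
      also have "\<dots> = real (card (levels s L')) * (Z powr R * G (L - L'))" by simp
      also have "\<dots> \<le> nJ * (Z powr R * G (L - L'))"
        unfolding nJ_def using card_levels_mono[OF s LL] G0 by (intro mult_right_mono) auto
      finally show ?thesis .
    qed
    have sumT: "(\<Sum>L'\<le>L. T L') \<le> nJ * Z powr R * K"
    proof -
      have "(\<Sum>L'\<le>L. T L') \<le> (\<Sum>L'\<le>L. nJ * (Z powr R * G (L - L')))"
        by (intro sum_mono Tsmall) auto
      also have "\<dots> = nJ * Z powr R * (\<Sum>L'\<le>L. G (L - L'))" by (simp add: sum_distrib_left mult.assoc)
      also have "(\<Sum>L'\<le>L. G (L - L')) = (\<Sum>d\<le>L. G d)" by (rule reindex_rev)
      also have "\<dots> \<le> K" using Kp[of L] by (simp add: G_def)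
      finally show ?thesis using nJ Z0 by (simp add: mult_left_mono)
    qed
    have S: "(\<Sum>L'. ennreal (\<Sum>jv\<in>levels s L'. wterm b \<alpha> s p (\<lambda>y. a * f0 b s N x L y) jv powr real_of_ereal q))
        = ennreal (\<Sum>L'\<le>L. T L')"
    proof -
      have "(\<Sum>L'. ennreal (\<Sum>jv\<in>levels s L'. wterm b \<alpha> s p (\<lambda>y. a * f0 b s N x L y) jv powr real_of_ereal q))
          = (\<Sum>L'. ennreal (T L'))" unfolding T_def W_def R qr by simp
      also have "\<dots> = (\<Sum>L'\<le>L. ennreal (T L'))"
        by (rule suminf_finite) (auto simp: Tbig)
      also have "\<dots> = ennreal (\<Sum>L'\<le>L. T L')" using T0 by (simp add: sum_ennreal)
      finally show ?thesis .
    qed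
    have "(\<Sum>L'\<le>L. T L') powr (1 / R) \<le> (nJ * Z powr R * K) powr (1 / R)"
      using sumT T0 R1 by (intro powr_mono2) (auto intro: sum_nonneg)
    also have "\<dots> = nJ powr (1 / R) * Z * K powr (1 / R)"
      using R1 Z0 by (simp add: powr_mult powr_powr)
    also have "\<dots> = 1" using key e by (simp add: algebra_simps)
    finally have fin: "(\<Sum>L'\<le>L. T L') powr (1 / R) \<le> 1" .
    show ?thesis
    proof -
      have ne: "ennreal (\<Sum>L'\<le>L. T L') \<noteq> top" by simp
      have "wav_norm b \<alpha> s p q (\<lambda>y. a * f0 b s N x L y) = ereal (enn2real (ennreal (\<Sum>L'\<le>L. T L')) powr (1 / real_of_ereal q))"
        unfolding wav_norm_def Let_def S using False ne by simp
      also have "enn2real (ennreal (\<Sum>L'\<le>L. T L')) = (\<Sum>L'\<le>L. T L')"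
        using T0 by (simp add: sum_nonneg)
      also have "real_of_ereal q = R" using R qr by simp
      finally show ?thesis using fin by simp
    qed
  qed
qed



lemma lower_final:
  fixes b s N L :: nat and nJ e \<mu> t :: real
  assumes b: "b \<ge> 2" and s: "s \<ge> 1" and N: "N \<ge> 3" and bL: "2 * N \<le> b ^ L"
    and nJ: "(real L / real s) ^ (s - 1) \<le> nJ" and e: "0 \<le> e" "e \<le> 1"
    and t_def: "t = real (s - 1) * (1 - e)"
    and \<mu>_def: "\<mu> = min 1 ((real s * ln (real b)) powr (- real (s - 1)))"
  shows "\<mu> * ln (real N) powr t \<le> nJ powr (1 - e)"
proof -
  have lnb: "ln (real b) > 0" using b by simp
  have lnN: "ln (real N) > 0" using N by simp
  define X where "X = ln (real N) / (real s * ln (real b))"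
  have X0: "X > 0" unfolding X_def using lnb lnN s by simp
  have "ln (real N) \<le> real L * ln (real b)"
  proof -
    have "real N \<le> real b ^ L" using bL by (metis le_trans le_add2 mult_2 of_nat_le_iff of_nat_power)
    hence "ln (real N) \<le> ln (real b ^ L)" using N b by (subst ln_le_cancel_iff) auto
    thus ?thesis using b by (simp add: ln_realpow)
  qed
  hence XL: "X \<le> real L / real s" unfolding X_def using lnb s by (simp add: field_simps)
  have "X ^ (s - 1) \<le> (real L / real s) ^ (s - 1)" using X0 XL by (intro power_mono) auto
  hence XnJ: "X ^ (s - 1) \<le> nJ" using nJ by simp
  have t0: "0 \<le> t" "t \<le> real (s - 1)" using e unfolding t_def by (auto simp: mult_left_le)
  have "(X ^ (s - 1)) powr (1 - e) \<le> nJ powr (1 - e)"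
    using XnJ X0 e by (intro powr_mono2) auto
  moreover have "(X ^ (s - 1)) powr (1 - e) = X powr t"
    using X0 by (simp add: powr_realpow[symmetric] powr_powr t_def)
  moreover have "X powr t = ln (real N) powr t * (real s * ln (real b)) powr (- t)"
  proof -
    have "X powr t = ln (real N) powr t / (real s * ln (real b)) powr t"
      unfolding X_def using lnN lnb s by (subst powr_divide) auto
    thus ?thesis by (simp add: powr_minus divide_inverse)
  qed
  moreover have "\<mu> \<le> (real s * ln (real b)) powr (- t)"
  proof (cases "real s * ln (real b) \<ge> 1")
    case True
    have "(real s * ln (real b)) powr (- real (s - 1)) \<le> (real s * ln (real b)) powr (- t)"
      using True t0 by (intro powr_mono) auto
    thus ?thesis unfolding \<mu>_def by simp
  next
    case False
    have pos: "real s * ln (real b) > 0" using s lnb by simp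
    have "(real s * ln (real b)) powr 0 \<le> (real s * ln (real b)) powr (- t)"
      using False t0 pos by (intro powr_mono') auto
    moreover have "(real s * ln (real b)) powr 0 = 1" using s lnb by simp
    ultimately have "1 \<le> (real s * ln (real b)) powr (- t)" by simp
    thus ?thesis unfolding \<mu>_def by (simp add: min_le_iff_disj)
  qed
  ultimately show ?thesis
  proof -
    assume A: "(X ^ (s - 1)) powr (1 - e) \<le> nJ powr (1 - e)" and B: "(X ^ (s - 1)) powr (1 - e) = X powr t"
      and C: "X powr t = ln (real N) powr t * (real s * ln (real b)) powr (- t)"
      and D: "\<mu> \<le> (real s * ln (real b)) powr (- t)"
    have "\<mu> * ln (real N) powr t \<le> (real s * ln (real b)) powr (- t) * ln (real N) powr t"
      using D by (intro mult_right_mono) auto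
    also have "\<dots> = X powr t" using C by simp
    also have "\<dots> \<le> nJ powr (1 - e)" using A B by simp
    finally show ?thesis .
  qed
qed

theorem theorem3:
  fixes b s :: nat and \<alpha> :: real and q :: ereal
  assumes "b \<ge> 2" and "s \<ge> 1" and "\<alpha> > 0" and "1 \<le> q"
  shows "\<exists>c>0. \<forall>(p::ereal) (N::nat) (w :: nat \<Rightarrow> real) (x :: nat \<Rightarrow> nat \<Rightarrow> real).
           1 \<le> p \<longrightarrow> N \<ge> 3 \<longrightarrow> (\<forall>i<N. \<forall>l<s. 0 \<le> x i l \<and> x i l < 1) \<longrightarrow>
           ereal (c * real N powr (- \<alpha>) * ln (real N) powr (real (s - 1) * (1 - einv q)))
             \<le> e_wor b \<alpha> s p q N w x"
proof -
  note b = assms(1) and s = assms(2) and \<alpha> = assms(3) and q = assms(4)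
  define R where "R = (if q = \<infinity> then 1 else real_of_ereal q)"
  have R1: "R \<ge> 1" using q unfolding R_def by (cases q) auto
  obtain K where K: "K > 0" and Kp: "\<And>L. (\<Sum>d\<le>L. (real d + 1) powr (real (s - 1) * R) * real b powr (- (R * \<alpha>) * real d)) \<le> K"
    using geo_bound[of "real (s - 1) * R" "real b" "R * \<alpha>"] R1 b \<alpha> by auto
  define e where "e = einv q"
  have e: "0 \<le> e" "e \<le> 1" using einv_range[OF q] by (auto simp: e_def)
  define \<mu> where "\<mu> = min 1 ((real s * ln (real b)) powr (- real (s - 1)))"
  have \<mu>0: "\<mu> > 0" unfolding \<mu>_def using s b by simp
  define c where "c = \<mu> / (2 ^ (s + 1) * K powr (1 / R) * (2 * real b) powr \<alpha>)"
  have c0: "c > 0" unfolding c_def using \<mu>0 K b by simp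
  show ?thesis
  proof (rule exI[of _ c], intro conjI allI impI, rule c0)
    fix p :: ereal and N :: nat and w :: "nat \<Rightarrow> real" and x :: "nat \<Rightarrow> nat \<Rightarrow> real"
    assume p: "1 \<le> p" and N: "N \<ge> 3"
    have b1: "b \<ge> 1" using b by simp
    define L where "L = (LEAST n. 2 * N \<le> b ^ n)"
    have ex: "\<exists>n. 2 * N \<le> b ^ n"
    proof
      have "2 * N < 2 ^ (2 * N)" by (rule less_exp)
      also have "(2::nat) ^ (2 * N) \<le> b ^ (2 * N)" using b by (intro power_mono) auto
      finally show "2 * N \<le> b ^ (2 * N)" by simp
    qed
    have bL: "2 * N \<le> b ^ L" unfolding L_def using ex by (rule LeastI_ex)
    have L0: "L \<ge> 1"
    proof (rule ccontr)
      assume "\<not> L \<ge> 1" hence "L = 0" by simp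
      thus False using bL N by simp
    qed
    have bL2: "\<not> 2 * N \<le> b ^ (L - 1)" unfolding L_def
      by (rule not_less_Least) (use L0 in \<open>simp add: L_def[symmetric]\<close>)
    have bLup: "real b ^ L \<le> 2 * real b * real N"
    proof -
      have "b ^ L = b * b ^ (L - 1)" using L0 by (simp add: power_Suc[symmetric])
      also have "\<dots> \<le> b * (2 * N)" using bL2 by (intro mult_left_mono) auto
      finally have "b ^ L \<le> b * (2 * N)" .
      hence "real (b ^ L) \<le> real (b * (2 * N))" by (simp only: of_nat_le_iff)
      thus ?thesis by simp
    qed
    define nJ where "nJ = real (card (levels s L))"
    have nJ0: "nJ > 0" unfolding nJ_def using levels_ne[OF s] finite_levels by (simp add: card_gt_0_iff)
    define a where "a = 1 / (2 ^ s * K powr (1 / R) * real b powr (\<alpha> * real L) * real (card (levels s L)) powr einv q)"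
    have a0: "a > 0" unfolding a_def using K nJ0 b unfolding nJ_def by simp
    define f where "f = (\<lambda>y. a * f0 b s N x L y)"
    have fH: "f \<in> Htilde b s" unfolding f_def by (rule f0_Htilde[OF b1])
    have fn: "wav_norm b \<alpha> s p q f \<le> 1" unfolding f_def
      by (rule f0_norm[OF b s q p K R_def Kp a_def])
    have fpts: "(\<Sum>i<N. w i * f (x i)) = 0" unfolding f_def by (simp add: f0_points)
    have fint: "integral\<^sup>L (cube s) f = a * integral\<^sup>L (cube s) (f0 b s N x L)" unfolding f_def by simp
    have fge: "a * (nJ / 2) \<le> integral\<^sup>L (cube s) f"
      unfolding fint nJ_def using a0 f0_integral_ge[OF b1 bL] by (intro mult_left_mono) auto
    have "ereal (a * (nJ / 2)) \<le> ereal \<bar>integral\<^sup>L (cube s) f - (\<Sum>i<N. w i * f (x i))\<bar>"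
      using fge fpts by simp
    also have "\<dots> \<le> e_wor b \<alpha> s p q N w x"
      unfolding e_wor_def using fH fn by (intro SUP_upper) auto
    finally have main: "ereal (a * (nJ / 2)) \<le> e_wor b \<alpha> s p q N w x" .
    define t where "t = real (s - 1) * (1 - e)"
    have low: "\<mu> * ln (real N) powr t \<le> nJ powr (1 - e)"
      using lower_final[OF b s N bL _ e t_def \<mu>_def] card_levels_lower[OF s, of L] unfolding nJ_def by simp
    have aeq: "a * (nJ / 2) = nJ powr (1 - e) / (2 ^ (s + 1) * K powr (1 / R) * real b powr (\<alpha> * real L))"
    proof -
      have "nJ = nJ powr (1 - e) * nJ powr e" using nJ0 by (simp add: powr_add[symmetric])
      hence "a * (nJ / 2) = (nJ powr (1 - e) * nJ powr e) / (2 * (2 ^ s * K powr (1 / R) * real b powr (\<alpha> * real L) * nJ powr e))"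
        unfolding a_def nJ_def e_def by (simp add: field_simps)
      also have "\<dots> = nJ powr (1 - e) / (2 ^ (s + 1) * K powr (1 / R) * real b powr (\<alpha> * real L))"
        using nJ0 by (simp add: field_simps)
      finally show ?thesis .
    qed
    have bpow: "real b powr (\<alpha> * real L) \<le> (2 * real b) powr \<alpha> * real N powr \<alpha>"
    proof -
      have "real b powr (\<alpha> * real L) = (real b ^ L) powr \<alpha>"
        using b by (simp add: powr_realpow[symmetric] powr_powr mult.commute)
      also have "\<dots> \<le> (2 * real b * real N) powr \<alpha>" using bLup \<alpha> by (intro powr_mono2) auto
      also have "\<dots> = (2 * real b) powr \<alpha> * real N powr \<alpha>" by (simp add: powr_mult)
      finally show ?thesis .
    qed
    have "c * real N powr (- \<alpha>) * ln (real N) powr (real (s - 1) * (1 - einv q))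
        = \<mu> * ln (real N) powr t / (2 ^ (s + 1) * K powr (1 / R) * ((2 * real b) powr \<alpha> * real N powr \<alpha>))"
      unfolding c_def t_def e_def using N by (simp add: powr_minus field_simps)
    also have "\<dots> \<le> nJ powr (1 - e) / (2 ^ (s + 1) * K powr (1 / R) * ((2 * real b) powr \<alpha> * real N powr \<alpha>))"
      using low K N b by (intro divide_right_mono) auto
    also have "\<dots> \<le> nJ powr (1 - e) / (2 ^ (s + 1) * K powr (1 / R) * real b powr (\<alpha> * real L))"
      using bpow K b nJ0 N by (intro divide_left_mono mult_left_mono) auto
    also have "\<dots> = a * (nJ / 2)" using aeq by simp
    finally have "ereal (c * real N powr (- \<alpha>) * ln (real N) powr (real (s - 1) * (1 - einv q))) \<le> ereal (a * (nJ / 2))"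
      by simp
    thus "ereal (c * real N powr (- \<alpha>) * ln (real N) powr (real (s - 1) * (1 - einv q))) \<le> e_wor b \<alpha> s p q N w x"
      using main by (rule order_trans)
  qed
qed


end
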